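(* Let $O\in O(2n)$, $k\in[n]$, $S\in\mathcal S_{2k}$ and $R\in\mathcal D_{2k}$. Define the deterministic post-processing of the outcomes $(\mathbf q,X)$ of $\mathsf G^O$ by $(\mathbf q,X)\mapsto e_S=\operatorname{sgn}(\det(O_{R,S}))\,x_S\,q_R\in\{\pm1\}$ (with the convention $\operatorname{sgn}(0)=1$). Then for each $e\in\{\pm1\}$, $$\sum_{(\mathbf q,X):\,e_S=e}\mathsf G^O(\mathbf q,X)=\tfrac12\big(I+e\,|\det(O_{R,S})|\,\gamma_S\big),$$ i.e. $\mathsf G^O$ jointly measures the unsharp observable $\mathsf M_S^{\eta}$ with sharpness $\eta=|\det(O_{R,S})|$.
   Context: Let $\gamma_1,\dots,\gamma_{2n}$ be Majorana operators on $(\mathbb C^2)^{\otimes n}$ (Hermitian, $\gamma_j\gamma_{j'}+\gamma_{j'}\gamma_j=2\delta_{jj'}I$); $\gamma_S=i^{\binom m2}\gamma_{j_1}\cdots\gamma_{j_m}$ for $S=\{j_1<\dots<j_m\}$, $\mathcal S_m=\{S\subseteq[2n]:|S|=m\}$. $\mathcal D_2=\{\{2j-1,2j\}:j\in[n]\}$, $\mathcal D_{2k}$ = unions of $k$ distinct elements of $\mathcal D_2$; for $R=R_1\cup\dots\cup R_k$ and $\mathbf q=(q_{R'})_{R'\in\mathcal D_2}\in\{\pm1\}^n$, $q_R=\prod_iq_{R_i}$. $O_{R,S}$ is the submatrix of $O$ with rows $R$, columns $S$. $x_S=(-1)^{|X||S|-|S\cap X|}$ for $X\subseteq[2n]$.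 For $R\in\mathcal D_2$: $\mathsf G^O_R(q,X)=2^{-2n-1}\big(I+q\sum_{S\in\mathcal S_2}x_S\det(O_{R,S})\gamma_S\big)$; $\mathsf G^O(\mathbf q,X)=(2^{2n})^{n-1}\prod_{R\in\mathcal D_2}\mathsf G^O_R(q_R,X)$. $\mathsf M^\eta_S(e)=\frac12(I+e\eta\gamma_S)$. *)

theory Defs
  imports "Jordan_Normal_Form.Schur_Decomposition" "Jordan_Normal_Form.Determinant"
    "HOL-Library.FuncSet"
begin

text \<open>Operators on (C^2)^{\<otimes> n} are complex matrices of dimension 2^n (JNF).
 Indices of Majoranas and of the 2n x 2n real matrix Ot are 1-based: [2n] = {1..2n};
 the JNF entry Ot $$ (i-1, j-1) is the (i,j) entry of Ot.\<close>

definition maj_dim :: "nat \<Rightarrow> nat" where "maj_dim n = 2 ^ n"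

definition majorana_ops :: "nat \<Rightarrow> (nat \<Rightarrow> complex mat) \<Rightarrow> bool" where
  "majorana_ops n \<gamma> \<longleftrightarrow>
     (\<forall>j\<in>{1..2*n}. \<gamma> j \<in> carrier_mat (maj_dim n) (maj_dim n) \<and> mat_adjoint (\<gamma> j) = \<gamma> j) \<and>
     (\<forall>j\<in>{1..2*n}. \<forall>j'\<in>{1..2*n}.
        \<gamma> j * \<gamma> j' + \<gamma> j' * \<gamma> j = (if j = j' then 2 \<cdot>\<^sub>m 1\<^sub>m (maj_dim n) else 0\<^sub>m (maj_dim n) (maj_dim n)))"

definition orth_group :: "nat \<Rightarrow> real mat set" where
  "orth_group m = {Ot. Ot \<in> carrier_mat m m \<and> Ot * transpose_mat Ot = 1\<^sub>m m}"

definition msum :: "nat \<Rightarrow> ('i \<Rightarrow> complex mat) \<Rightarrow> 'i set \<Rightarrow> complex mat" where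
  "msum N f A = mat N N (\<lambda>ij. \<Sum>a\<in>A. f a $$ ij)"

definition gammaS :: "nat \<Rightarrow> (nat \<Rightarrow> complex mat) \<Rightarrow> nat set \<Rightarrow> complex mat" where
  "gammaS n \<gamma> S = (\<i> ^ (card S choose 2)) \<cdot>\<^sub>m
      foldr (\<lambda>j M. \<gamma> j * M) (sorted_list_of_set S) (1\<^sub>m (maj_dim n))"

definition SS :: "nat \<Rightarrow> nat \<Rightarrow> nat set set" where
  "SS n m = {S. S \<subseteq> {1..2*n} \<and> card S = m}"

definition pairD :: "nat \<Rightarrow> nat set" where "pairD j = {2*j - 1, 2*j}"

definition DD :: "nat \<Rightarrow> nat \<Rightarrow> nat set set" where
  "DD n k = {\<Union>(pairD ` J) | J. J \<subseteq> {1..n} \<and> card J = k}"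

text \<open>q_R for R in D_{2k}, where q j is q_{{2j-1,2j}}.\<close>
definition qR :: "nat \<Rightarrow> (nat \<Rightarrow> int) \<Rightarrow> nat set \<Rightarrow> int" where
  "qR n q R = (\<Prod>j\<in>{j\<in>{1..n}. pairD j \<subseteq> R}. q j)"

definition submat :: "real mat \<Rightarrow> nat set \<Rightarrow> nat set \<Rightarrow> real mat" where
  "submat Ot R S = (let rs = sorted_list_of_set R; ss = sorted_list_of_set S in
     mat (card R) (card S) (\<lambda>(a,b). Ot $$ (rs ! a - 1, ss ! b - 1)))"

definition xS :: "nat set \<Rightarrow> nat set \<Rightarrow> int" where
  "xS X S = (-1) ^ (card X * card S - card (S \<inter> X))"

definition G_R :: "nat \<Rightarrow> (nat \<Rightarrow> complex mat) \<Rightarrow> real mat \<Rightarrow> nat set \<Rightarrow> int \<Rightarrow> nat set \<Rightarrow> complex mat" where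
  "G_R n \<gamma> Ot R q X = (1 / 2 ^ (2*n+1)) \<cdot>\<^sub>m
     (1\<^sub>m (maj_dim n) + of_int q \<cdot>\<^sub>m
       msum (maj_dim n) (\<lambda>S. (of_int (xS X S) * complex_of_real (det (submat Ot R S))) \<cdot>\<^sub>m gammaS n \<gamma> S) (SS n 2))"

text \<open>G^Ot(q,X) = (2^{2n})^{n-1} prod_{j=1..n} G_{{2j-1,2j}}(q_j, X) (factors commute).\<close>
definition G_op :: "nat \<Rightarrow> (nat \<Rightarrow> complex mat) \<Rightarrow> real mat \<Rightarrow> (nat \<Rightarrow> int) \<Rightarrow> nat set \<Rightarrow> complex mat" where
  "G_op n \<gamma> Ot q X = ((2 ^ (2*n)) ^ (n - 1)) \<cdot>\<^sub>m
     foldr (\<lambda>j M. G_R n \<gamma> Ot (pairD j) (q j) X * M) [1..<n+1] (1\<^sub>m (maj_dim n))"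

definition outcomes :: "nat \<Rightarrow> ((nat \<Rightarrow> int) \<times> nat set) set" where
  "outcomes n = (PiE {1..n} (\<lambda>_. {-1, 1})) \<times> Pow {1..2*n}"

definition sgn1 :: "real \<Rightarrow> int" where "sgn1 x = (if x < 0 then -1 else 1)"

definition eS :: "nat \<Rightarrow> real mat \<Rightarrow> nat set \<Rightarrow> nat set \<Rightarrow> (nat \<Rightarrow> int) \<Rightarrow> nat set \<Rightarrow> int" where
  "eS n Ot R S q X = sgn1 (det (submat Ot R S)) * xS X S * qR n q R"

end

theory Submission
  imports Defs "HOL-Combinatorics.Permutations"
begin


lemma mult_carrier_sq[simp]: "A \<in> carrier_mat N N \<Longrightarrow> B \<in> carrier_mat N N \<Longrightarrow> A * B \<in> carrier_mat N N"
  by (rule mult_carrier_mat)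

lemma smult_smult_mat: "a \<cdot>\<^sub>m (b \<cdot>\<^sub>m (A :: 'a :: semigroup_mult mat)) = (a * b) \<cdot>\<^sub>m A"
  by (rule eq_matI) (auto simp: mult.assoc)

lemma one_smult_mat[simp]: "(1 :: 'a :: monoid_mult) \<cdot>\<^sub>m A = A"
  by (rule eq_matI) auto

lemma msum_carrier[simp]: "msum N f A \<in> carrier_mat N N"
  by (simp add: msum_def)

lemma msum_dim[simp]: "dim_row (msum N f A) = N" "dim_col (msum N f A) = N"
  by (simp_all add: msum_def)

lemma msum_index: "i < N \<Longrightarrow> j < N \<Longrightarrow> msum N f A $$ (i,j) = (\<Sum>a\<in>A. f a $$ (i,j))"
  by (simp add: msum_def)

lemma msum_cong: "(\<And>a. a \<in> A \<Longrightarrow> f a = g a) \<Longrightarrow> msum N f A = msum N g A"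
  by (simp add: msum_def)

lemma msum_empty[simp]: "msum N f {} = 0\<^sub>m N N"
  by (auto simp: msum_def)

lemma msum_insert: "finite A \<Longrightarrow> a \<notin> A \<Longrightarrow> f a \<in> carrier_mat N N \<Longrightarrow>
  msum N f (insert a A) = f a + msum N f A"
  by (rule eq_matI) (auto simp: msum_def)

lemma msum_add: assumes "(\<And>a. a \<in> A \<Longrightarrow> f a \<in> carrier_mat N N)" "(\<And>a. a \<in> A \<Longrightarrow> g a \<in> carrier_mat N N)" shows
  "msum N (\<lambda>a. f a + g a) A = msum N f A + msum N g A"
proof (rule eq_matI)
  fix i j assume ij: "i < dim_row (msum N f A + msum N g A)" "j < dim_col (msum N f A + msum N g A)"
  have "\<And>a. a \<in> A \<Longrightarrow> (f a + g a) $$ (i,j) = f a $$ (i,j) + g a $$ (i,j)"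
    using ij assms by (metis carrier_matD(1,2) index_add_mat(1) index_add_mat(2) index_add_mat(3) msum_carrier)
  then show "msum N (\<lambda>a. f a + g a) A $$ (i, j) = (msum N f A + msum N g A) $$ (i, j)"
    using ij by (simp add: msum_def sum.distrib)
qed (auto simp: msum_def)

lemma msum_smult: assumes "(\<And>a. a \<in> A \<Longrightarrow> f a \<in> carrier_mat N N)" shows
  "msum N (\<lambda>a. c \<cdot>\<^sub>m f a) A = c \<cdot>\<^sub>m msum N f A"
proof (rule eq_matI)
  fix i j assume ij: "i < dim_row (c \<cdot>\<^sub>m msum N f A)" "j < dim_col (c \<cdot>\<^sub>m msum N f A)"
  have "\<And>a. a \<in> A \<Longrightarrow> (c \<cdot>\<^sub>m f a) $$ (i,j) = c * f a $$ (i,j)"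
    using ij assms by (metis carrier_matD(1,2) index_smult_mat msum_carrier)
  then show "msum N (\<lambda>a. c \<cdot>\<^sub>m f a) A $$ (i, j) = (c \<cdot>\<^sub>m msum N f A) $$ (i, j)"
    using ij by (simp add: msum_def sum_distrib_left)
qed (auto simp: msum_def)

lemma msum_scalar: "M \<in> carrier_mat N N \<Longrightarrow>
  msum N (\<lambda>a. c a \<cdot>\<^sub>m M) A = (\<Sum>a\<in>A. c a) \<cdot>\<^sub>m M"
  by (rule eq_matI) (auto simp: msum_def sum_distrib_right)

lemma msum_swap: "msum N (\<lambda>a. msum N (\<lambda>b. f a b) B) A = msum N (\<lambda>b. msum N (\<lambda>a. f a b) A) B"
  by (rule eq_matI) (simp_all add: msum_def, rule sum.swap)

lemma msum_reindex: "inj_on h A \<Longrightarrow> msum N f (h ` A) = msum N (f \<circ> h) A"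
  by (rule eq_matI) (auto simp: msum_def sum.reindex)

lemma msum_Sigma: "finite A \<Longrightarrow> finite B \<Longrightarrow> msum N f (A \<times> B) = msum N (\<lambda>a. msum N (\<lambda>b. f (a,b)) B) A"
  by (rule eq_matI) (auto simp: msum_def sum.cartesian_product)

lemma msum_if: assumes "finite A" shows "msum N f {a\<in>A. P a} = msum N (\<lambda>a. if P a then f a else 0\<^sub>m N N) A"
proof (rule eq_matI)
  fix i j assume ij: "i < dim_row (msum N (\<lambda>a. if P a then f a else 0\<^sub>m N N) A)"
    "j < dim_col (msum N (\<lambda>a. if P a then f a else 0\<^sub>m N N) A)"
  then have ij': "i < N" "j < N" by auto
  have "(\<Sum>a\<in>{a\<in>A. P a}. f a $$ (i,j)) = (\<Sum>a\<in>A. if P a then f a $$ (i,j) else 0)"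
    using assms by (rule sum.inter_filter)
  also have "\<dots> = (\<Sum>a\<in>A. (if P a then f a else 0\<^sub>m N N) $$ (i,j))"
    using ij' by (intro sum.cong) auto
  finally show "msum N f {a\<in>A. P a} $$ (i, j) = msum N (\<lambda>a. if P a then f a else 0\<^sub>m N N) A $$ (i, j)"
    using ij' by (simp add: msum_def)
qed simp_all

lemma msum_mult_left: assumes "B \<in> carrier_mat N N" "finite A" "(\<And>a. a \<in> A \<Longrightarrow> f a \<in> carrier_mat N N)"
  shows "B * msum N f A = msum N (\<lambda>a. B * f a) A"
proof (rule eq_matI)
  fix i j assume ij: "i < dim_row (msum N (\<lambda>a. B * f a) A)" "j < dim_col (msum N (\<lambda>a. B * f a) A)"
  then have ij': "i < N" "j < N" by auto
  have "(B * msum N f A) $$ (i,j) = (\<Sum>l<N. B $$ (i,l) * (\<Sum>a\<in>A. f a $$ (l,j)))"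
    using ij' assms by (simp add: scalar_prod_def msum_def lessThan_atLeast0)
  also have "\<dots> = (\<Sum>a\<in>A. \<Sum>l<N. B $$ (i,l) * f a $$ (l,j))"
    by (simp add: sum_distrib_left) (rule sum.swap)
  also have "\<dots> = (\<Sum>a\<in>A. (B * f a) $$ (i,j))"
  proof (rule sum.cong)
    fix a assume "a \<in> A" then have "f a \<in> carrier_mat N N" using assms by auto
    then show "(\<Sum>l<N. B $$ (i,l) * f a $$ (l,j)) = (B * f a) $$ (i,j)"
      using ij' assms by (simp add: scalar_prod_def lessThan_atLeast0)
  qed simp
  finally show "(B * msum N f A) $$ (i, j) = msum N (\<lambda>a. B * f a) A $$ (i, j)"
    using ij' by (simp add: msum_def)
qed (use assms in simp_all)

lemma msum_mult_right: assumes "B \<in> carrier_mat N N" "finite A" "(\<And>a. a \<in> A \<Longrightarrow> f a \<in> carrier_mat N N)"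
  shows "msum N f A * B = msum N (\<lambda>a. f a * B) A"
proof (rule eq_matI)
  fix i j assume ij: "i < dim_row (msum N (\<lambda>a. f a * B) A)" "j < dim_col (msum N (\<lambda>a. f a * B) A)"
  then have ij': "i < N" "j < N" by auto
  have "(msum N f A * B) $$ (i,j) = (\<Sum>l<N. (\<Sum>a\<in>A. f a $$ (i,l)) * B $$ (l,j))"
    using ij' assms by (simp add: scalar_prod_def msum_def lessThan_atLeast0)
  also have "\<dots> = (\<Sum>a\<in>A. \<Sum>l<N. f a $$ (i,l) * B $$ (l,j))"
    by (simp add: sum_distrib_right) (rule sum.swap)
  also have "\<dots> = (\<Sum>a\<in>A. (f a * B) $$ (i,j))"
  proof (rule sum.cong)
    fix a assume "a \<in> A" then have "f a \<in> carrier_mat N N" using assms by auto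
    then show "(\<Sum>l<N. f a $$ (i,l) * B $$ (l,j)) = (f a * B) $$ (i,j)"
      using ij' assms by (simp add: scalar_prod_def lessThan_atLeast0)
  qed simp
  finally show "(msum N f A * B) $$ (i, j) = msum N (\<lambda>a. f a * B) A $$ (i, j)"
    using ij' by (simp add: msum_def)
qed (use assms in simp_all)

lemma msum_PiE_insert:
  assumes "x \<notin> S" "finite S"
  shows "msum N F (PiE (insert x S) T) = msum N (\<lambda>y. msum N (\<lambda>g. F (g(x := y))) (PiE S T)) (T x)"
proof -
  have "msum N F (PiE (insert x S) T) = msum N (F \<circ> (\<lambda>(y, g). g(x := y))) (T x \<times> PiE S T)"
    unfolding PiE_insert_eq by (rule msum_reindex[OF inj_combinator[OF assms(1)]])
  also have "\<dots> = msum N (\<lambda>y. msum N (\<lambda>g. F (g(x := y))) (PiE S T)) (T x)"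
    by (rule eq_matI) (auto simp: msum_def sum.cartesian_product')
  finally show ?thesis .
qed



definition mprod :: "nat \<Rightarrow> complex mat list \<Rightarrow> complex mat" where
  "mprod N xs = foldr (*) xs (1\<^sub>m N)"

lemma mprod_Nil[simp]: "mprod N [] = 1\<^sub>m N" by (simp add: mprod_def)
lemma mprod_Cons[simp]: "mprod N (x # xs) = x * mprod N xs" by (simp add: mprod_def)

lemma mprod_carrier[simp]: "set xs \<subseteq> carrier_mat N N \<Longrightarrow> mprod N xs \<in> carrier_mat N N"
  by (induction xs) auto

lemma mprod_append: "set xs \<subseteq> carrier_mat N N \<Longrightarrow> set ys \<subseteq> carrier_mat N N \<Longrightarrow>
   mprod N (xs @ ys) = mprod N xs * mprod N ys"
proof (induction xs)
  case Nil then show ?case by (simp add: left_mult_one_mat[OF mprod_carrier])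
next
  case (Cons x xs)
  then show ?case by (simp add: assoc_mult_mat[of x N N _ N _ N])
qed

locale majset =
  fixes n :: nat and \<gamma> :: "nat \<Rightarrow> complex mat"
  assumes maj: "majorana_ops n \<gamma>"
begin

abbreviation "N \<equiv> maj_dim n"

lemmas sqs = mult_smult_distrib[of _ N N _ N] mult_smult_assoc_mat[of _ N N _ N] assoc_mult_mat[of _ N N _ N _ N] smult_smult_mat

lemma gcar0: "j \<in> {1..2*n} \<Longrightarrow> \<gamma> j \<in> carrier_mat N N"
  using maj by (auto simp: majorana_ops_def)

lemma gcar[simp]: "1 \<le> j \<Longrightarrow> j \<le> 2*n \<Longrightarrow> \<gamma> j \<in> carrier_mat N N"
  using gcar0 by auto

lemma gmcar[simp]: "1 \<le> j \<Longrightarrow> j \<le> 2*n \<Longrightarrow> 1 \<le> j' \<Longrightarrow> j' \<le> 2*n \<Longrightarrow> \<gamma> j * \<gamma> j' \<in> carrier_mat N N"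
  by simp

lemma gcar_list[simp]: "set w \<subseteq> {1..2*n} \<Longrightarrow> set (map \<gamma> w) \<subseteq> carrier_mat N N"
  by auto

lemma mprod_g_car[simp]: "set w \<subseteq> {1..2*n} \<Longrightarrow> mprod N (map \<gamma> w) \<in> carrier_mat N N"
  by (rule mprod_carrier) (use gcar0 in auto)

lemma mprod_map_append: "set xs \<subseteq> {1..2*n} \<Longrightarrow> set ys \<subseteq> {1..2*n} \<Longrightarrow>
  mprod N (map \<gamma> (xs @ ys)) = mprod N (map \<gamma> xs) * mprod N (map \<gamma> ys)"
  unfolding map_append by (rule mprod_append) (use gcar0 in auto)

lemma ganti: assumes "j \<in> {1..2*n}" "j' \<in> {1..2*n}" "j \<noteq> j'"
  shows "\<gamma> j * \<gamma> j' = (-1) \<cdot>\<^sub>m (\<gamma> j' * \<gamma> j)"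
proof -
  have e: "\<gamma> j * \<gamma> j' + \<gamma> j' * \<gamma> j = 0\<^sub>m N N" using maj assms by (auto simp: majorana_ops_def)
  have c1: "\<gamma> j * \<gamma> j' \<in> carrier_mat N N" "\<gamma> j' * \<gamma> j \<in> carrier_mat N N" using assms by auto
  show ?thesis
  proof (rule eq_matI)
    fix a b assume ab: "a < dim_row ((-1) \<cdot>\<^sub>m (\<gamma> j' * \<gamma> j))" "b < dim_col ((-1) \<cdot>\<^sub>m (\<gamma> j' * \<gamma> j))"
    then have ab': "a < N" "b < N" using c1 by auto
    have "(\<gamma> j * \<gamma> j' + \<gamma> j' * \<gamma> j) $$ (a,b) = 0" using e ab' by simp
    then have "(\<gamma> j * \<gamma> j') $$ (a,b) + (\<gamma> j' * \<gamma> j) $$ (a,b) = 0" using c1 ab'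
      by (subst (asm) index_add_mat) (auto simp: carrier_matD[OF c1(1)] carrier_matD[OF c1(2)])
    then show "(\<gamma> j * \<gamma> j') $$ (a, b) = ((-1) \<cdot>\<^sub>m (\<gamma> j' * \<gamma> j)) $$ (a, b)"
      using c1 ab' by (subst index_smult_mat) (auto simp: carrier_matD[OF c1(2)] add_eq_0_iff)
  qed (insert gcar0[OF assms(1)] gcar0[OF assms(2)], auto)
qed

lemma gsq: assumes "j \<in> {1..2*n}" shows "\<gamma> j * \<gamma> j = 1\<^sub>m N"
proof -
  have e: "\<gamma> j * \<gamma> j + \<gamma> j * \<gamma> j = 2 \<cdot>\<^sub>m 1\<^sub>m N" using maj assms by (auto simp: majorana_ops_def)
  have c1: "\<gamma> j * \<gamma> j \<in> carrier_mat N N" using assms by auto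
  show ?thesis
  proof (rule eq_matI)
    fix a b assume ab: "a < dim_row (1\<^sub>m N)" "b < dim_col (1\<^sub>m N :: complex mat)"
    then have ab': "a < N" "b < N" by auto
    have "(\<gamma> j * \<gamma> j + \<gamma> j * \<gamma> j) $$ (a,b) = (2 \<cdot>\<^sub>m 1\<^sub>m N) $$ (a,b)" using e by simp
    then have "2 * (\<gamma> j * \<gamma> j) $$ (a,b) = 2 * (1\<^sub>m N :: complex mat) $$ (a,b)" using c1 ab'
      by (subst (asm) index_add_mat) (auto simp: carrier_matD[OF c1])
    then show "(\<gamma> j * \<gamma> j) $$ (a, b) = 1\<^sub>m N $$ (a, b)" by simp
  qed (use c1 in auto)
qed

lemma gcomm_prod: assumes "x \<in> {1..2*n}" "set B \<subseteq> {1..2*n}" "x \<notin> set B"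
  shows "\<gamma> x * mprod N (map \<gamma> B) = ((-1)^length B) \<cdot>\<^sub>m (mprod N (map \<gamma> B) * \<gamma> x)"
  using assms(2,3)
proof (induction B)
  case Nil 
  have "\<gamma> x \<in> carrier_mat N N" using assms(1) gcar0 by blast
  then show ?case by (simp add: left_mult_one_mat[of _ N N] right_mult_one_mat[of _ N N])
next
  case (Cons b B)
  have cb: "\<gamma> b \<in> carrier_mat N N" and cx: "\<gamma> x \<in> carrier_mat N N"
    and cB: "mprod N (map \<gamma> B) \<in> carrier_mat N N" using Cons.prems assms(1) by auto
  have xb: "x \<noteq> b" "b \<in> {1..2*n}" using Cons.prems by auto
  have "\<gamma> x * mprod N (map \<gamma> (b # B)) = (\<gamma> x * \<gamma> b) * mprod N (map \<gamma> B)"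
    using cb cx cB by (simp add: assoc_mult_mat[of _ N N _ N _ N])
  also have "\<dots> = ((-1) \<cdot>\<^sub>m (\<gamma> b * \<gamma> x)) * mprod N (map \<gamma> B)"
    using ganti[OF assms(1) xb(2) xb(1)] by simp
  also have "\<dots> = (-1) \<cdot>\<^sub>m (\<gamma> b * (\<gamma> x * mprod N (map \<gamma> B)))"
    using cb cx cB by (simp add: mult_smult_assoc_mat[of _ N N _ N] assoc_mult_mat[of _ N N _ N _ N])
  also have "\<gamma> x * mprod N (map \<gamma> B) = ((-1)^length B) \<cdot>\<^sub>m (mprod N (map \<gamma> B) * \<gamma> x)"
    using Cons by auto
  also have "(-1) \<cdot>\<^sub>m (\<gamma> b * (((-1)^length B) \<cdot>\<^sub>m (mprod N (map \<gamma> B) * \<gamma> x))) =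
     ((-1)^length (b#B)) \<cdot>\<^sub>m (mprod N (map \<gamma> (b#B)) * \<gamma> x)"
    using cb cx cB by (simp add: sqs)
  finally show ?case .
qed

lemma gswap: assumes "distinct (A @ x # B @ y # C)" "set (A @ x # B @ y # C) \<subseteq> {1..2*n}"
  shows "mprod N (map \<gamma> (A @ y # B @ x # C)) = (-1) \<cdot>\<^sub>m mprod N (map \<gamma> (A @ x # B @ y # C))"
proof -
  let ?A = "mprod N (map \<gamma> A)" and ?B = "mprod N (map \<gamma> B)" and ?C = "mprod N (map \<gamma> C)"
  have x: "x \<in> {1..2*n}" and y: "y \<in> {1..2*n}" and sB: "set B \<subseteq> {1..2*n}" using assms by auto
  have cA: "?A \<in> carrier_mat N N" and cB: "?B \<in> carrier_mat N N" and cC: "?C \<in> carrier_mat N N"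
    and cx: "\<gamma> x \<in> carrier_mat N N" and cy: "\<gamma> y \<in> carrier_mat N N" using assms by auto
  have xB: "x \<notin> set B" and yB: "y \<notin> set B" and xy: "x \<noteq> y" using assms(1) by auto
  have e1: "mprod N (map \<gamma> (A @ x # B @ y # C)) = ?A * (\<gamma> x * (?B * (\<gamma> y * ?C)))"
  proof -
    have "mprod N (map \<gamma> (A @ x # B @ y # C)) = ?A * mprod N (map \<gamma> (x # B @ y # C))"
      using assms by (intro mprod_map_append) auto
    also have "\<dots> = ?A * (\<gamma> x * mprod N (map \<gamma> (B @ y # C)))" by simp
    also have "mprod N (map \<gamma> (B @ y # C)) = ?B * mprod N (map \<gamma> (y # C))"
      using assms by (intro mprod_map_append) auto
    finally show ?thesis by simp
  qed
  have e2: "mprod N (map \<gamma> (A @ y # B @ x # C)) = ?A * (\<gamma> y * (?B * (\<gamma> x * ?C)))"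
  proof -
    have "mprod N (map \<gamma> (A @ y # B @ x # C)) = ?A * mprod N (map \<gamma> (y # B @ x # C))"
      using assms by (intro mprod_map_append) auto
    also have "\<dots> = ?A * (\<gamma> y * mprod N (map \<gamma> (B @ x # C)))" by simp
    also have "mprod N (map \<gamma> (B @ x # C)) = ?B * mprod N (map \<gamma> (x # C))"
      using assms by (intro mprod_map_append) auto
    finally show ?thesis by simp
  qed
  have hx: "\<gamma> x * ?B = ((-1)^length B) \<cdot>\<^sub>m (?B * \<gamma> x)" by (rule gcomm_prod[OF x sB xB])
  have hy: "\<gamma> y * ?B = ((-1)^length B) \<cdot>\<^sub>m (?B * \<gamma> y)" by (rule gcomm_prod[OF y sB yB])
  have hxy: "\<gamma> x * \<gamma> y = (-1) \<cdot>\<^sub>m (\<gamma> y * \<gamma> x)" by (rule ganti[OF x y xy])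
  have hy': "?B * \<gamma> y = ((-1)^length B) \<cdot>\<^sub>m (\<gamma> y * ?B)"
    using hy cB cy by (simp add: smult_smult_mat power_mult_distrib[symmetric])
  have pw: "((-1)^length B * (-1) * (-1)^length B :: complex) = -1"
    by (simp add: power_mult_distrib[symmetric] mult.commute)
  have "\<gamma> x * (?B * (\<gamma> y * ?C)) = ((\<gamma> x * ?B) * \<gamma> y) * ?C"
    using cB cC cx cy by (simp add: sqs)
  also have "\<dots> = ((-1)^length B) \<cdot>\<^sub>m (?B * (\<gamma> x * \<gamma> y) * ?C)"
    unfolding hx using cB cC cx cy by (simp add: sqs)
  also have "\<dots> = ((-1)^length B * (-1)) \<cdot>\<^sub>m ((?B * \<gamma> y) * \<gamma> x * ?C)"
    unfolding hxy using cB cC cx cy by (simp add: sqs)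
  also have "\<dots> = ((-1)^length B * (-1) * (-1)^length B) \<cdot>\<^sub>m (\<gamma> y * (?B * (\<gamma> x * ?C)))"
    unfolding hy' using cB cC cx cy by (simp add: sqs)
  finally have k: "\<gamma> x * (?B * (\<gamma> y * ?C)) = (-1) \<cdot>\<^sub>m (\<gamma> y * (?B * (\<gamma> x * ?C)))"
    unfolding pw .
  have "\<gamma> y * (?B * (\<gamma> x * ?C)) = (-1) \<cdot>\<^sub>m (\<gamma> x * (?B * (\<gamma> y * ?C)))"
    unfolding k using cB cC cx cy by (simp add: smult_smult_mat)
  then show ?thesis unfolding e1 e2 using cA cB cC cx cy by (simp add: sqs)
qed

end


lemma upd2: "(A @ x # B @ y # C)[length A := y', length A + Suc (length B) := x'] = A @ y' # B @ x' # C"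
  by (simp add: list_update_append)

lemma decomp2: assumes "i < j" "j < length w"
  shows "w = take i w @ w!i # take (j - Suc i) (drop (Suc i) w) @ w!j # drop (Suc j) w"
proof -
  let ?D = "drop (Suc i) w"
  have w1: "w = take i w @ w!i # ?D" using assms by (intro id_take_nth_drop) simp
  have l: "j - Suc i < length ?D" using assms by simp
  have d: "?D = take (j - Suc i) ?D @ ?D!(j - Suc i) # drop (Suc (j - Suc i)) ?D"
    by (rule id_take_nth_drop[OF l])
  have "?D!(j - Suc i) = w!j" using assms by simp
  moreover have "drop (Suc (j - Suc i)) ?D = drop (Suc j) w" using assms
    by (simp add: Suc_diff_Suc)
  ultimately have "?D = take (j - Suc i) ?D @ w!j # drop (Suc j) w" using d by simp
  then show ?thesis using w1 by simp
qed

context majset begin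

lemma gswap_lt: assumes "distinct w" "set w \<subseteq> {1..2*n}" "i < j" "j < length w"
  shows "mprod N (map \<gamma> (w[i := w!j, j := w!i])) = (-1) \<cdot>\<^sub>m mprod N (map \<gamma> w)"
proof -
  define A where "A = take i w"
  define B where "B = take (j - Suc i) (drop (Suc i) w)"
  define C where "C = drop (Suc j) w"
  have w: "w = A @ w!i # B @ w!j # C" unfolding A_def B_def C_def using decomp2[OF assms(3,4)] .
  have lA: "length A = i" using assms unfolding A_def by simp
  have lB: "length A + Suc (length B) = j" using assms unfolding A_def B_def by simp
  have "w[i := w!j, j := w!i] = A @ w!j # B @ w!i # C"
    by (subst (1) w) (metis lA lB upd2)
  then show ?thesis using gswap[of A "w!i" B "w!j" C] assms w by metis
qed

lemma gswap_pos: assumes "distinct w" "set w \<subseteq> {1..2*n}" "i < length w" "j < length w" "i \<noteq> j"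
  shows "mprod N (map \<gamma> (w[i := w!j, j := w!i])) = (-1) \<cdot>\<^sub>m mprod N (map \<gamma> w)"
proof (cases "i < j")
  case True then show ?thesis using gswap_lt assms by blast
next
  case False
  then have "j < i" using assms by simp
  moreover have "w[i := w!j, j := w!i] = w[j := w!i, i := w!j]" using assms by (simp add: list_update_swap)
  ultimately show ?thesis using gswap_lt[of w j i] assms by simp
qed

lemma gperm: assumes "distinct ss" "set ss \<subseteq> {1..2*n}" "length ss = m" "p permutes {0..<m}"
  shows "mprod N (map \<gamma> (map (\<lambda>i. ss!(p i)) [0..<m])) = of_int (sign p) \<cdot>\<^sub>m mprod N (map \<gamma> ss)"
  using assms(4) finite_atLeastLessThan
proof (induction p rule: permutes_induct)
  case id
  have "map (\<lambda>i. ss!(id i)) [0..<m] = ss" using assms(3) map_nth[of ss] by (simp add: id_def)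
  then show ?case by simp
next
  case (swap a b p)
  let ?w = "map (\<lambda>i. ss!(p i)) [0..<m]"
  define ia where "ia = inv_into UNIV p a"
  define ib where "ib = inv_into UNIV p b"
  have ip: "inv_into UNIV p permutes {0..<m}" using swap.hyps(4) by (rule permutes_inv)
  have ia: "ia < m" "p ia = a" using swap.hyps(1) ip swap.hyps(4) unfolding ia_def
    by (auto simp: permutes_inverses permutes_in_image)
  have ib: "ib < m" "p ib = b" using swap.hyps(2) ip swap.hyps(4) unfolding ib_def
    by (auto simp: permutes_inverses permutes_in_image)
  have iab: "ia \<noteq> ib" using ia ib swap.hyps(3) by auto
  have injp: "inj_on p {0..<m}" using swap.hyps(4) by (meson permutes_inj_on)
  have pm: "\<And>k. k < m \<Longrightarrow> p k < m" using swap.hyps(4) by (simp add: permutes_in_image)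
  have dw: "distinct ?w"
    using assms(1,3) injp pm by (auto simp: distinct_map inj_on_def nth_eq_iff_index_eq)
  have sw: "set ?w \<subseteq> {1..2*n}" using assms(2,3) pm by auto
  have e: "map (\<lambda>i. ss!((Transposition.transpose a b \<circ> p) i)) [0..<m] = ?w[ia := ?w!ib, ib := ?w!ia]"
  proof (rule nth_equalityI)
    fix k assume k: "k < length (map (\<lambda>i. ss!((Transposition.transpose a b \<circ> p) i)) [0..<m])"
    then have k': "k < m" by simp
    have pk: "p k = a \<longleftrightarrow> k = ia" "p k = b \<longleftrightarrow> k = ib"
      using injp ia ib k' by (auto simp: inj_on_def)
    show "map (\<lambda>i. ss!((Transposition.transpose a b \<circ> p) i)) [0..<m] ! k = ?w[ia := ?w!ib, ib := ?w!ia] ! k"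
      using k' ia ib iab pk by (auto simp: nth_list_update transpose_def)
  qed simp
  have "mprod N (map \<gamma> (map (\<lambda>i. ss!((Transposition.transpose a b \<circ> p) i)) [0..<m])) = (-1) \<cdot>\<^sub>m mprod N (map \<gamma> ?w)"
    unfolding e by (rule gswap_pos[OF dw sw]) (use ia ib iab in auto)
  also have "\<dots> = (-1) \<cdot>\<^sub>m (of_int (sign p) \<cdot>\<^sub>m mprod N (map \<gamma> ss))" using swap.IH by simp
  also have "sign (Transposition.transpose a b \<circ> p) = - sign p"
  proof -
    have "permutation p" using swap.hyps(4) finite_atLeastLessThan permutation_permutes by blast
    then have "sign (Transposition.transpose a b \<circ> p) = sign (Transposition.transpose a b) * sign p"
      by (simp add: sign_compose permutation_swap_id)
    then show ?thesis using swap.hyps(3) by (simp add: sign_swap_id)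
  qed
  ultimately show ?case by (simp add: smult_smult_mat comp_def)
qed

end


lemma mprod_msum_expand:
  assumes "distinct L" "finite A" "\<And>a. a \<in> A \<Longrightarrow> M a \<in> carrier_mat N N"
  shows "mprod N (map (\<lambda>r. msum N (\<lambda>a. c r a \<cdot>\<^sub>m M a) A) L) =
    msum N (\<lambda>f. (\<Prod>r\<in>set L. c r (f r)) \<cdot>\<^sub>m mprod N (map (\<lambda>r. M (f r)) L)) (PiE (set L) (\<lambda>_. A))"
  using assms(1)
proof (induction L)
  case Nil
  have "msum N (\<lambda>f. (\<Prod>r\<in>set []. c r (f r)) \<cdot>\<^sub>m mprod N (map (\<lambda>r. M (f r)) [])) (PiE (set []) (\<lambda>_. A))
     = 1\<^sub>m N" by (simp add: msum_insert)
  then show ?case by simp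
next
  case (Cons r L)
  have rL: "r \<notin> set L" "distinct L" using Cons.prems by auto
  have cM: "\<And>f. f \<in> PiE (set L) (\<lambda>_. A) \<Longrightarrow> mprod N (map (\<lambda>r. M (f r)) L) \<in> carrier_mat N N"
    using assms(3) by (intro mprod_carrier) (auto simp: PiE_iff)
  have fin: "finite (PiE (set L) (\<lambda>_. A))" using assms(2) by (simp add: finite_PiE)
  have "mprod N (map (\<lambda>r. msum N (\<lambda>a. c r a \<cdot>\<^sub>m M a) A) (r # L)) =
     msum N (\<lambda>a. c r a \<cdot>\<^sub>m M a) A * msum N (\<lambda>f. (\<Prod>r\<in>set L. c r (f r)) \<cdot>\<^sub>m mprod N (map (\<lambda>r. M (f r)) L)) (PiE (set L) (\<lambda>_. A))"
    using Cons.IH rL by simp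
  also have "\<dots> = msum N (\<lambda>a. msum N (\<lambda>g. (c r a * (\<Prod>r\<in>set L. c r (g r))) \<cdot>\<^sub>m (M a * mprod N (map (\<lambda>r. M (g r)) L))) (PiE (set L) (\<lambda>_. A))) A"
    apply (subst msum_mult_right)
    using assms(2,3) apply (auto)[3]
    apply (rule msum_cong)
    apply (subst msum_mult_left)
    using fin cM assms(3) apply (auto)[3]
    apply (rule msum_cong)
    using cM assms(3) by (simp add: mult_smult_distrib[of _ N N _ N] mult_smult_assoc_mat[of _ N N _ N] smult_smult_mat mult.commute)
  also have "\<dots> = msum N (\<lambda>f. (\<Prod>r\<in>set (r#L). c r (f r)) \<cdot>\<^sub>m mprod N (map (\<lambda>r. M (f r)) (r#L))) (PiE (set (r#L)) (\<lambda>_. A))"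
    unfolding set_simps
    apply (subst msum_PiE_insert[OF rL(1)])
     apply simp
    apply (rule msum_cong)+
    subgoal for a g
    proof -
      assume g: "g \<in> PiE (set L) (\<lambda>_. A)"
      have p: "(\<Prod>r'\<in>insert r (set L). c r' ((g(r := a)) r')) = c r a * (\<Prod>r\<in>set L. c r (g r))"
      proof -
        have "(\<Prod>r'\<in>set L. c r' ((g(r := a)) r')) = (\<Prod>r\<in>set L. c r (g r))" using rL by (intro prod.cong) auto
        then show ?thesis using rL by (simp add: prod.insert)
      qed
      have m: "map (\<lambda>r'. M ((g(r := a)) r')) L = map (\<lambda>r. M (g r)) L"
        using rL by (intro map_cong) auto
      have mm2: "mprod N (map (\<lambda>ra. M ((g(r := a)) ra)) L) = mprod N (map (\<lambda>r. M (g r)) L)"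
        by (rule arg_cong[where f="mprod N", OF m])
      show ?thesis using p mm2 by (simp add: fun_upd_same del: fun_upd_apply)
    qed
    done
  finally show ?case .
qed

lemma foldr_car: "B \<in> carrier_mat N N \<Longrightarrow> (\<And>j. j \<in> set L \<Longrightarrow> F j \<in> carrier_mat N N) \<Longrightarrow>
  foldr (\<lambda>j M. F j * M) L B \<in> carrier_mat N N"
  by (induction L) auto

lemma comb2: "P \<in> carrier_mat N N \<Longrightarrow> Q \<in> carrier_mat N N \<Longrightarrow>
  a \<cdot>\<^sub>m (P + b \<cdot>\<^sub>m Q) + a' \<cdot>\<^sub>m (P + b' \<cdot>\<^sub>m Q) = (a + a') \<cdot>\<^sub>m P + (a * b + a' * b') \<cdot>\<^sub>m (Q :: complex mat)"
  by (rule eq_matI) (auto simp: algebra_simps)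

lemma qsum:
  assumes "distinct L" "\<And>j. j \<in> set L \<Longrightarrow> A j \<in> carrier_mat N N" "B \<in> carrier_mat N N"
  shows "msum N (\<lambda>q. of_int (\<Prod>j\<in>set L \<inter> J. q j) \<cdot>\<^sub>m foldr (\<lambda>j M. (c \<cdot>\<^sub>m (1\<^sub>m N + of_int (q j) \<cdot>\<^sub>m A j)) * M) L B)
      (PiE (set L) (\<lambda>_. {-1, 1 :: int}))
    = ((2 * c) ^ length L) \<cdot>\<^sub>m foldr (\<lambda>j M. (if j \<in> J then A j else 1\<^sub>m N) * M) L B"
  using assms(1,2)
proof (induction L)
  case Nil
  then show ?case using assms(3) by (simp add: msum_insert)
next
  case (Cons a L)
  have aL: "a \<notin> set L" "distinct L" using Cons.prems by auto
  have cA: "\<And>j. j \<in> set L \<Longrightarrow> A j \<in> carrier_mat N N" "A a \<in> carrier_mat N N" using Cons.prems by auto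
  define Fg where "Fg = (\<lambda>g. foldr (\<lambda>j M. (c \<cdot>\<^sub>m (1\<^sub>m N + of_int (g j) \<cdot>\<^sub>m A j)) * M) L B)"
  define H where "H = foldr (\<lambda>j M. (if j \<in> J then A j else 1\<^sub>m N) * M) L B"
  have cF: "\<And>g. Fg g \<in> carrier_mat N N" unfolding Fg_def using assms(3) cA by (intro foldr_car) auto
  have cH: "H \<in> carrier_mat N N" unfolding H_def using assms(3) cA by (intro foldr_car) auto
  have fin: "finite (PiE (set L) (\<lambda>_. {-1, 1 :: int}))" by (simp add: finite_PiE)
  define K where "K = (\<lambda>x::int. c \<cdot>\<^sub>m (1\<^sub>m N + of_int x \<cdot>\<^sub>m A a))"
  have cK: "\<And>x. K x \<in> carrier_mat N N" unfolding K_def using cA by simp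
  have IH: "msum N (\<lambda>g. of_int (\<Prod>j\<in>set L \<inter> J. g j) \<cdot>\<^sub>m Fg g) (PiE (set L) (\<lambda>_. {-1, 1 :: int})) = ((2 * c) ^ length L) \<cdot>\<^sub>m H"
    using Cons.IH aL cA unfolding Fg_def H_def by simp
  have inner: "\<And>x. msum N (\<lambda>g. of_int (\<Prod>j\<in>insert a (set L) \<inter> J. (g(a := x)) j) \<cdot>\<^sub>m
        foldr (\<lambda>j M. (c \<cdot>\<^sub>m (1\<^sub>m N + of_int ((g(a := x)) j) \<cdot>\<^sub>m A j)) * M) (a # L) B) (PiE (set L) (\<lambda>_. {-1, 1 :: int}))
     = (of_int (if a \<in> J then x else 1) * (2 * c) ^ length L) \<cdot>\<^sub>m (K x * H)"
  proof -
    fix x :: int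
    have e: "\<And>g. g \<in> PiE (set L) (\<lambda>_. {-1, 1 :: int}) \<Longrightarrow>
       of_int (\<Prod>j\<in>insert a (set L) \<inter> J. (g(a := x)) j) \<cdot>\<^sub>m
        foldr (\<lambda>j M. (c \<cdot>\<^sub>m (1\<^sub>m N + of_int ((g(a := x)) j) \<cdot>\<^sub>m A j)) * M) (a # L) B
       = K x * (of_int (if a \<in> J then x else 1) \<cdot>\<^sub>m (of_int (\<Prod>j\<in>set L \<inter> J. g j) \<cdot>\<^sub>m Fg g))"
    proof -
      fix g assume g: "g \<in> PiE (set L) (\<lambda>_. {-1, 1 :: int})"
      have gg: "(\<Prod>j\<in>set L \<inter> J. (g(a := x)) j) = (\<Prod>j\<in>set L\<inter>J. g j)" using aL by (intro prod.cong) auto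
      have p: "(\<Prod>j\<in>insert a (set L) \<inter> J. (g(a := x)) j) = (if a \<in> J then x else 1) * (\<Prod>j\<in>set L \<inter> J. g j)"
      proof (cases "a \<in> J")
        case True
        then have "insert a (set L) \<inter> J = insert a (set L \<inter> J)" by auto
        then show ?thesis using aL True gg by (simp add: prod.insert)
      next
        case False
        then have "insert a (set L) \<inter> J = set L \<inter> J" by auto
        then show ?thesis using aL False gg by simp
      qed
      have f: "foldr (\<lambda>j M. (c \<cdot>\<^sub>m (1\<^sub>m N + of_int ((g(a := x)) j) \<cdot>\<^sub>m A j)) * M) L B = Fg g"
        unfolding Fg_def using aL by (intro foldr_cong) auto
      show "of_int (\<Prod>j\<in>insert a (set L) \<inter> J. (g(a := x)) j) \<cdot>\<^sub>m
        foldr (\<lambda>j M. (c \<cdot>\<^sub>m (1\<^sub>m N + of_int ((g(a := x)) j) \<cdot>\<^sub>m A j)) * M) (a # L) B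
       = K x * (of_int (if a \<in> J then x else 1) \<cdot>\<^sub>m (of_int (\<Prod>j\<in>set L \<inter> J. g j) \<cdot>\<^sub>m Fg g))"
        using f p cF cA unfolding K_def
        by (simp add: mult_smult_distrib[of _ N N _ N] smult_smult_mat mult.commute)
    qed
    have "msum N (\<lambda>g. of_int (\<Prod>j\<in>insert a (set L) \<inter> J. (g(a := x)) j) \<cdot>\<^sub>m
        foldr (\<lambda>j M. (c \<cdot>\<^sub>m (1\<^sub>m N + of_int ((g(a := x)) j) \<cdot>\<^sub>m A j)) * M) (a # L) B) (PiE (set L) (\<lambda>_. {-1, 1 :: int}))
      = msum N (\<lambda>g. K x * (of_int (if a \<in> J then x else 1) \<cdot>\<^sub>m (of_int (\<Prod>j\<in>set L \<inter> J. g j) \<cdot>\<^sub>m Fg g))) (PiE (set L) (\<lambda>_. {-1, 1 :: int}))"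
      using e by (rule msum_cong)
    also have "\<dots> = K x * msum N (\<lambda>g. of_int (if a \<in> J then x else 1) \<cdot>\<^sub>m (of_int (\<Prod>j\<in>set L \<inter> J. g j) \<cdot>\<^sub>m Fg g)) (PiE (set L) (\<lambda>_. {-1, 1 :: int}))"
      using cK fin cF by (subst msum_mult_left) auto
    also have "\<dots> = K x * (of_int (if a \<in> J then x else 1) \<cdot>\<^sub>m (((2 * c) ^ length L) \<cdot>\<^sub>m H))"
      using cF IH[simplified] by (subst msum_smult) auto
    also have "\<dots> = (of_int (if a \<in> J then x else 1) * (2 * c) ^ length L) \<cdot>\<^sub>m (K x * H)"
      using cK cH by (simp add: mult_smult_distrib[of _ N N _ N] smult_smult_mat)
    finally show "?thesis x" .
  qed
  have "msum N (\<lambda>q. of_int (\<Prod>j\<in>set (a # L) \<inter> J. q j) \<cdot>\<^sub>m foldr (\<lambda>j M. (c \<cdot>\<^sub>m (1\<^sub>m N + of_int (q j) \<cdot>\<^sub>m A j)) * M) (a # L) B)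
      (PiE (set (a # L)) (\<lambda>_. {-1, 1 :: int}))
    = msum N (\<lambda>x. (of_int (if a \<in> J then x else 1) * (2 * c) ^ length L) \<cdot>\<^sub>m (K x * H)) {-1, 1}"
    unfolding set_simps
    apply (subst msum_PiE_insert[OF aL(1)])
     apply simp
    apply (rule msum_cong)
    apply (rule inner)
    done
  also have "\<dots> = (of_int (if a \<in> J then -1 else 1) * (2 * c) ^ length L) \<cdot>\<^sub>m (K (-1) * H)
      + (of_int (if a \<in> J then 1 else 1) * (2 * c) ^ length L) \<cdot>\<^sub>m (K 1 * H)"
    using cK cH by (simp add: msum_insert)
  also have "\<dots> = ((2 * c) ^ length (a # L)) \<cdot>\<^sub>m ((if a \<in> J then A a else 1\<^sub>m N) * H)"
  proof -
    have k: "\<And>x. K x * H = c \<cdot>\<^sub>m (H + of_int x \<cdot>\<^sub>m (A a * H))"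
      unfolding K_def using cA cH
      by (simp add: mult_smult_assoc_mat[of _ N N _ N] add_mult_distrib_mat[of _ N N _ _ N] left_mult_one_mat[of _ N N])
    show ?thesis unfolding k using cA cH
      by (subst smult_smult_mat, subst smult_smult_mat, subst comb2[of _ N], auto simp: algebra_simps)
  qed
  finally show ?case unfolding H_def by simp
qed



definition sig :: "nat set \<Rightarrow> nat \<Rightarrow> complex" where "sig X a = (if a \<in> X then -1 else 1)"

lemma even_bij:
  assumes fI: "finite I" and SI: "S \<subseteq> I" and fD: "finite D" and cD: "card D = card S" and fDI: "f ` D \<subseteq> I"
  shows "(\<forall>a\<in>I. even ((if a \<in> S then 1 else 0) + card {r\<in>D. f r = a})) \<longleftrightarrow> bij_betw f D S"
proof
  assume ev: "\<forall>a\<in>I. even ((if a \<in> S then 1 else 0) + card {r\<in>D. f r = a})"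
  have "S \<subseteq> f ` D"
  proof
    fix a assume a: "a \<in> S"
    then have "odd (card {r\<in>D. f r = a})" using ev SI by force
    then have "card {r\<in>D. f r = a} \<noteq> 0" by presburger
    then have "{r\<in>D. f r = a} \<noteq> {}" by (metis (no_types, lifting) card.empty)
    then show "a \<in> f ` D" by auto
  qed
  moreover have "card (f ` D) \<le> card S" using card_image_le[OF fD] cD by simp
  moreover have "finite S" using SI fI finite_subset by blast
  ultimately have eq: "f ` D = S"
    by (metis card_seteq fD finite_imageI)
  then have "inj_on f D" using cD fD by (simp add: eq_card_imp_inj_on)
  then show "bij_betw f D S" using eq by (simp add: bij_betw_def)
next
  assume b: "bij_betw f D S"
  show "\<forall>a\<in>I. even ((if a \<in> S then 1 else 0) + card {r\<in>D. f r = a})"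
  proof
    fix a assume "a \<in> I"
    show "even ((if a \<in> S then 1 else 0) + card {r\<in>D. f r = a})"
    proof (cases "a \<in> S")
      case True
      then obtain r where r: "r \<in> D" "f r = a" using b by (auto simp: bij_betw_def)
      have "{r\<in>D. f r = a} = {r}" using b r by (auto simp: bij_betw_def inj_on_def)
      then show ?thesis using True by simp
    next
      case False
      have e: "{r\<in>D. f r = a} = {}" using b False by (auto simp: bij_betw_def)
      have "card {r\<in>D. f r = a} = 0" by (simp only: e card.empty)
      then show ?thesis using False by simp
    qed
  qed
qed

lemma sum_pow_prod:
  assumes "finite I"
  shows "(\<Sum>X\<in>Pow I. \<Prod>a\<in>I. if a \<in> X then e a else (1::complex)) = (\<Prod>a\<in>I. e a + 1)"
proof -
  have "(\<Prod>a\<in>I. e a + 1) = (\<Sum>X\<in>Pow I. (\<Prod>a\<in>X. e a) * (\<Prod>a\<in>I-X. 1))"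
    using assms by (rule prod_add)
  also have "\<dots> = (\<Sum>X\<in>Pow I. \<Prod>a\<in>I. if a \<in> X then e a else (1::complex))"
  proof (rule sum.cong)
    fix X assume "X \<in> Pow I"
    then have "I \<inter> X = X" by auto
    then show "(\<Prod>a\<in>X. e a) * (\<Prod>a\<in>I-X. 1) = (\<Prod>a\<in>I. if a \<in> X then e a else 1)"
      using prod.inter_restrict[OF assms, of e X] by simp
  qed simp
  finally show ?thesis by simp
qed

lemma prod_even:
  assumes "finite I"
  shows "(\<Prod>a\<in>I. (-1::complex)^(m a) + 1) = (if \<forall>a\<in>I. even (m a) then 2^card I else 0)"
proof (cases "\<forall>a\<in>I. even (m a)")
  case True
  then have "(\<Prod>a\<in>I. (-1::complex)^(m a) + 1) = (\<Prod>a\<in>I. 2)" by (intro prod.cong) auto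
  then show ?thesis using True by simp
next
  case False
  then obtain a where "a \<in> I" "odd (m a)" by auto
  then have "(-1::complex)^(m a) + 1 = 0" by simp
  then show ?thesis using False \<open>a \<in> I\<close> assms by (simp add: prod_zero_iff) blast
qed

lemma parity_sum:
  assumes fI: "finite I" and SI: "S \<subseteq> I" and fD: "finite D" and cD: "card D = card S" and fDI: "f ` D \<subseteq> I"
  shows "(\<Sum>X\<in>Pow I. (\<Prod>a\<in>S. sig X a) * (\<Prod>r\<in>D. sig X (f r))) = (if bij_betw f D S then 2^card I else 0)"
proof -
  define m where "m a = (if a \<in> S then 1 else 0) + card {r\<in>D. f r = a}" for a
  have key: "(\<Prod>a\<in>S. sig X a) * (\<Prod>r\<in>D. sig X (f r)) = (\<Prod>a\<in>I. if a \<in> X then (-1)^(m a) else 1)" for X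
  proof -
    have p1: "(\<Prod>r\<in>D. sig X (f r)) = (\<Prod>a\<in>I. sig X a ^ card {r\<in>D. f r = a})"
    proof -
      have "(\<Prod>r\<in>D. sig X (f r)) = (\<Prod>a\<in>I. \<Prod>r\<in>{r. r \<in> D \<and> f r = a}. sig X (f r))"
        using prod.group[OF fD fI fDI, of "\<lambda>r. sig X (f r)"] by simp
      also have "\<dots> = (\<Prod>a\<in>I. sig X a ^ card {r\<in>D. f r = a})"
        by (intro prod.cong refl) simp
      finally show ?thesis .
    qed
    have p2: "(\<Prod>a\<in>S. sig X a) = (\<Prod>a\<in>I. sig X a ^ (if a \<in> S then 1 else 0))"
    proof -
      have "I \<inter> S = S" using SI by auto
      then have "(\<Prod>a\<in>S. sig X a) = (\<Prod>a\<in>I. if a \<in> S then sig X a else 1)"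
        using prod.inter_restrict[OF fI, of "sig X" S] by simp
      also have "\<dots> = (\<Prod>a\<in>I. sig X a ^ (if a \<in> S then 1 else 0))" by (intro prod.cong) auto
      finally show ?thesis .
    qed
    have "(\<Prod>a\<in>S. sig X a) * (\<Prod>r\<in>D. sig X (f r)) = (\<Prod>a\<in>I. sig X a ^ m a)"
      unfolding p1 p2 m_def by (simp add: prod.distrib power_add)
    also have "\<dots> = (\<Prod>a\<in>I. if a \<in> X then (-1)^(m a) else 1)"
      by (intro prod.cong) (auto simp: sig_def)
    finally show ?thesis .
  qed
  have "(\<Sum>X\<in>Pow I. (\<Prod>a\<in>S. sig X a) * (\<Prod>r\<in>D. sig X (f r))) = (\<Prod>a\<in>I. (-1)^(m a) + 1)"
    unfolding key by (rule sum_pow_prod[OF fI])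
  also have "\<dots> = (if \<forall>a\<in>I. even (m a) then 2^card I else 0)" by (rule prod_even[OF fI])
  also have "(\<forall>a\<in>I. even (m a)) \<longleftrightarrow> bij_betw f D S"
    unfolding m_def by (rule even_bij[OF assms])
  finally show ?thesis .
qed



lemma msum_Un: "finite A \<Longrightarrow> finite B \<Longrightarrow> A \<inter> B = {} \<Longrightarrow> msum N f (A \<union> B) = msum N f A + msum N f B"
  by (rule eq_matI) (auto simp: msum_def sum.union_disjoint)

lemma zero_smult_one: "(0::complex) \<cdot>\<^sub>m 1\<^sub>m N = 0\<^sub>m N N"
  by (rule eq_matI) auto

lemma msum_zero: "msum N (\<lambda>a. 0\<^sub>m N N) A = 0\<^sub>m N N"
  by (rule eq_matI) (auto simp: msum_def)

lemma sorted_eq: "finite A \<Longrightarrow> sorted xs \<Longrightarrow> distinct xs \<Longrightarrow> set xs = A \<Longrightarrow> sorted_list_of_set A = xs"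
  by (metis sorted_distinct_set_unique sorted_sorted_list_of_set distinct_sorted_list_of_set set_sorted_list_of_set)

lemma perm2: assumes "p permutes {0..<2::nat}" shows "p = id \<or> p = Transposition.transpose 0 1"
proof -
  have p0: "p 0 < 2" "p 1 < 2" using permutes_in_image[OF assms] by auto
  have "inj p" using assms by (rule permutes_inj)
  then have inj: "p 0 \<noteq> p 1" by (metis inj_eq zero_neq_one)
  have out: "\<And>x. \<not> x < 2 \<Longrightarrow> p x = x" using assms by (auto simp: permutes_def)
  have x01: "\<And>x::nat. x < 2 \<Longrightarrow> x = 0 \<or> x = 1" by auto
  show ?thesis
  proof (cases "p 0 = 0")
    case True
    then have "p 1 = 1" using p0 inj x01 by metis
    have "p x = id x" for x
    proof (cases "x < 2")
      case True then show ?thesis using x01 \<open>p 0 = 0\<close> \<open>p 1 = 1\<close> by fastforce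
    qed (simp add: out)
    then show ?thesis by blast
  next
    case False
    then have a: "p 0 = 1" using p0 x01 by metis
    then have b: "p 1 = 0" using p0 inj x01 by metis
    have "p x = Transposition.transpose 0 1 x" for x
    proof (cases "x < 2")
      case True then show ?thesis using x01 a b by fastforce
    qed (simp add: out transpose_def)
    then show ?thesis by blast
  qed
qed

lemma det2: assumes "A \<in> carrier_mat 2 2"
  shows "det A = A $$ (0,0) * A $$ (1,1) - A $$ (0,1) * A $$ (1,0)"
proof -
  have P: "{p. p permutes {0..<2::nat}} = {id, Transposition.transpose 0 1}"
    using perm2 by (auto simp: permutes_id permutes_swap_id)
  have ne: "id \<noteq> Transposition.transpose (0::nat) 1" by (metis id_apply transpose_apply_first zero_neq_one)
  have s: "sign (Transposition.transpose (0::nat) 1) = -1" by (simp add: sign_swap_id)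
  have pr: "\<And>f::nat \<Rightarrow> 'a. (\<Prod>i = 0..<2. f i) = f 0 * f 1" by (simp add: numeral_2_eq_2)
  have "det A = (\<Sum>p\<in>{id, Transposition.transpose 0 1}. signof p * (\<Prod>i = 0..<2. A $$ (i, p i)))"
    unfolding det_def'[OF assms] P ..
  also have "\<dots> = signof id * (\<Prod>i = 0..<2. A $$ (i, id i)) + signof (Transposition.transpose (0::nat) 1) * (\<Prod>i = 0..<2. A $$ (i, Transposition.transpose 0 1 i))"
    by (subst sum.insert) (use ne in auto)
  also have "\<dots> = A $$ (0,0) * A $$ (1,1) - A $$ (0,1) * A $$ (1,0)"
    unfolding pr s by (simp add: sign_id)
  finally show ?thesis .
qed

locale osetup = majset +
  fixes Ot :: "real mat"
  assumes orth: "Ot \<in> orth_group (2*n)"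
begin

definition cc :: "nat set \<Rightarrow> nat \<Rightarrow> nat \<Rightarrow> complex" where
  "cc X r a = complex_of_real (Ot $$ (r-1, a-1)) * sig X a"

definition u :: "nat set \<Rightarrow> nat \<Rightarrow> complex mat" where
  "u X r = msum N (\<lambda>a. cc X r a \<cdot>\<^sub>m \<gamma> a) {1..2*n}"

lemma u_car[simp]: "u X r \<in> carrier_mat N N" by (simp add: u_def)

lemma orth_rows: assumes "r1 \<in> {1..2*n}" "r2 \<in> {1..2*n}" "r1 \<noteq> r2"
  shows "(\<Sum>a\<in>{1..2*n}. Ot $$ (r1-1, a-1) * Ot $$ (r2-1, a-1)) = 0"
proof -
  have O: "Ot \<in> carrier_mat (2*n) (2*n)" "Ot * transpose_mat Ot = 1\<^sub>m (2*n)" using orth by (auto simp: orth_group_def)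
  have i: "r1 - 1 < 2*n" "r2 - 1 < 2*n" "r1 - 1 \<noteq> r2 - 1" using assms by auto
  have z: "(Ot * transpose_mat Ot) $$ (r1-1, r2-1) = 0" using O i by simp
  have "(Ot * transpose_mat Ot) $$ (r1-1, r2-1) = (\<Sum>l<2*n. Ot $$ (r1-1, l) * Ot $$ (r2-1, l))"
    using O(1) i by (simp add: scalar_prod_def lessThan_atLeast0)
  then have "(\<Sum>l<2*n. Ot $$ (r1-1, l) * Ot $$ (r2-1, l)) = 0" using z by simp
  moreover have "(\<Sum>l<2*n. Ot $$ (r1-1, l) * Ot $$ (r2-1, l)) = (\<Sum>a\<in>{1..2*n}. Ot $$ (r1-1, a-1) * Ot $$ (r2-1, a-1))"
    by (rule sum.reindex_bij_witness[of _ "\<lambda>a. a - 1" Suc]) auto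
  ultimately show ?thesis by simp
qed

abbreviation "Lt \<equiv> {p \<in> {1..2*n} \<times> {1..2*n}. fst p < snd p}"

lemma uu: assumes "r1 \<in> {1..2*n}" "r2 \<in> {1..2*n}" "r1 \<noteq> r2"
  shows "u X r1 * u X r2 = msum N (\<lambda>p. (cc X r1 (fst p) * cc X r2 (snd p) - cc X r1 (snd p) * cc X r2 (fst p))
      \<cdot>\<^sub>m (\<gamma> (fst p) * \<gamma> (snd p))) Lt"
proof -
  let ?I = "{1..2*n}"
  define F where "F p = (cc X r1 (fst p) * cc X r2 (snd p)) \<cdot>\<^sub>m (\<gamma> (fst p) * \<gamma> (snd p))" for p
  have cF: "\<And>p. p \<in> ?I \<times> ?I \<Longrightarrow> F p \<in> carrier_mat N N" unfolding F_def by auto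
  have "u X r1 * u X r2 = msum N (\<lambda>a. msum N (\<lambda>b. F (a,b)) ?I) ?I"
    unfolding u_def
    apply (subst msum_mult_right, simp, simp, simp)
    apply (rule msum_cong)
    apply (subst msum_mult_left, simp, simp, simp)
    apply (rule msum_cong)
    unfolding F_def by (simp add: sqs mult.commute)
  also have "\<dots> = msum N F (?I \<times> ?I)" by (simp add: msum_Sigma)
  also have "?I \<times> ?I = (Lt \<union> prod.swap ` Lt) \<union> {p \<in> ?I \<times> ?I. fst p = snd p}"
    by (auto simp: image_iff)
  also have "msum N F \<dots> = (msum N F Lt + msum N F (prod.swap ` Lt)) + msum N F {p \<in> ?I \<times> ?I. fst p = snd p}"
    by (subst msum_Un, auto)+
  also have "msum N F {p \<in> ?I \<times> ?I. fst p = snd p} = 0\<^sub>m N N"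
  proof -
    have e: "{p \<in> ?I \<times> ?I. fst p = snd p} = (\<lambda>a. (a,a)) ` ?I" by auto
    have "msum N F {p \<in> ?I \<times> ?I. fst p = snd p} = msum N (\<lambda>a. (cc X r1 a * cc X r2 a) \<cdot>\<^sub>m 1\<^sub>m N) ?I"
      unfolding e by (subst msum_reindex) (auto simp: inj_on_def F_def gsq intro!: msum_cong)
    also have "\<dots> = (\<Sum>a\<in>?I. cc X r1 a * cc X r2 a) \<cdot>\<^sub>m 1\<^sub>m N" by (rule msum_scalar) simp
    also have "(\<Sum>a\<in>?I. cc X r1 a * cc X r2 a) = complex_of_real (\<Sum>a\<in>?I. Ot $$ (r1-1, a-1) * Ot $$ (r2-1, a-1))"
      by (simp add: cc_def sig_def) (intro sum.cong, auto)
    also have "\<dots> = 0" using orth_rows[OF assms] by simp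
    finally show ?thesis by (simp add: zero_smult_one)
  qed
  also have "msum N F (prod.swap ` Lt) = msum N (\<lambda>p. (- (cc X r1 (snd p) * cc X r2 (fst p))) \<cdot>\<^sub>m (\<gamma> (fst p) * \<gamma> (snd p))) Lt"
  proof -
    have "msum N F (prod.swap ` Lt) = msum N (F \<circ> prod.swap) Lt" by (rule msum_reindex) simp
    also have "\<dots> = msum N (\<lambda>p. (- (cc X r1 (snd p) * cc X r2 (fst p))) \<cdot>\<^sub>m (\<gamma> (fst p) * \<gamma> (snd p))) Lt"
    proof (rule msum_cong)
      fix p assume p: "p \<in> Lt"
      obtain a b where ab: "p = (a,b)" by (cases p)
      have a: "a \<in> ?I" "b \<in> ?I" "b \<noteq> a" using p ab by auto
      have "(F \<circ> prod.swap) p = (cc X r1 b * cc X r2 a) \<cdot>\<^sub>m (\<gamma> b * \<gamma> a)" unfolding ab F_def by simp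
      also have "\<gamma> b * \<gamma> a = (-1) \<cdot>\<^sub>m (\<gamma> a * \<gamma> b)" by (rule ganti[OF a(2) a(1) a(3)])
      finally show "(F \<circ> prod.swap) p = (- (cc X r1 (snd p) * cc X r2 (fst p))) \<cdot>\<^sub>m (\<gamma> (fst p) * \<gamma> (snd p))"
        unfolding ab by (simp add: smult_smult_mat)
    qed
    finally show ?thesis .
  qed
  also have "msum N F Lt + \<dots> = msum N (\<lambda>p. (cc X r1 (fst p) * cc X r2 (snd p) - cc X r1 (snd p) * cc X r2 (fst p))
      \<cdot>\<^sub>m (\<gamma> (fst p) * \<gamma> (snd p))) Lt"
  proof -
    have "msum N F Lt + msum N (\<lambda>p. (- (cc X r1 (snd p) * cc X r2 (fst p))) \<cdot>\<^sub>m (\<gamma> (fst p) * \<gamma> (snd p))) Lt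
      = msum N (\<lambda>p. F p + (- (cc X r1 (snd p) * cc X r2 (fst p))) \<cdot>\<^sub>m (\<gamma> (fst p) * \<gamma> (snd p))) Lt"
      by (rule msum_add[symmetric]) (auto simp: F_def)
    also have "\<dots> = msum N (\<lambda>p. (cc X r1 (fst p) * cc X r2 (snd p) - cc X r1 (snd p) * cc X r2 (fst p))
      \<cdot>\<^sub>m (\<gamma> (fst p) * \<gamma> (snd p))) Lt"
    proof (rule msum_cong)
      fix p assume p: "p \<in> Lt"
      then have c: "\<gamma> (fst p) * \<gamma> (snd p) \<in> carrier_mat N N" by auto
      show "F p + (- (cc X r1 (snd p) * cc X r2 (fst p))) \<cdot>\<^sub>m (\<gamma> (fst p) * \<gamma> (snd p)) =
        (cc X r1 (fst p) * cc X r2 (snd p) - cc X r1 (snd p) * cc X r2 (fst p)) \<cdot>\<^sub>m (\<gamma> (fst p) * \<gamma> (snd p))"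
        unfolding F_def using add_smult_distrib_right_mat[OF c, symmetric] by simp
    qed
    finally show ?thesis .
  qed
  finally show ?thesis by simp
qed

end


lemma neg1_pow_diff: "k \<le> 2*c \<Longrightarrow> (-1::int)^(2*c - k) = (-1)^k"
  by (simp add: minus_one_power_iff even_diff_nat)

lemma xS_pair: assumes "a \<noteq> b" "finite X"
  shows "complex_of_int (xS X {a,b}) = sig X a * sig X b"
proof -
  have k: "card ({a,b} \<inter> X) \<le> 2 * card X"
    using card_mono[OF assms(2), of "{a,b} \<inter> X"] by auto
  have "xS X {a,b} = (-1)^(2 * card X - card ({a,b} \<inter> X))"
    using assms by (simp add: xS_def mult_2)
  also have "\<dots> = (-1)^card ({a,b} \<inter> X)" by (rule neg1_pow_diff[OF k])
  finally have e: "xS X {a,b} = (-1)^card ({a,b} \<inter> X)" .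
  show ?thesis
  proof (cases "a \<in> X"; cases "b \<in> X")
    assume "a \<in> X" "b \<in> X"
    then have "{a,b} \<inter> X = {a,b}" by auto
    then show ?thesis using e assms \<open>a \<in> X\<close> \<open>b \<in> X\<close> by (simp add: sig_def)
  next
    assume "a \<in> X" "b \<notin> X"
    then have "{a,b} \<inter> X = {a}" by auto
    then show ?thesis using e assms \<open>a \<in> X\<close> \<open>b \<notin> X\<close> by (simp add: sig_def)
  next
    assume "a \<notin> X" "b \<in> X"
    then have "{a,b} \<inter> X = {b}" by auto
    then show ?thesis using e assms \<open>a \<notin> X\<close> \<open>b \<in> X\<close> by (simp add: sig_def)
  next
    assume "a \<notin> X" "b \<notin> X"
    then have "{a,b} \<inter> X = {}" by auto
    then show ?thesis using e assms \<open>a \<notin> X\<close> \<open>b \<notin> X\<close> by (simp add: sig_def)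
  qed
qed

lemma sorted_pairD: "j \<ge> 1 \<Longrightarrow> sorted_list_of_set (pairD j) = [2*j-1, 2*j]"
proof -
  assume j: "j \<ge> 1"
  have s: "sorted [2*j-1, 2*j]" by simp
  have d: "distinct [2*j-1, 2*j]" using j by simp
  have e: "set [2*j-1, 2*j] = pairD j" by (simp add: pairD_def)
  have f: "finite (pairD j)" by (simp add: pairD_def)
  show ?thesis by (rule sorted_eq[OF f s d e])
qed

lemma sorted_pair: "a < b \<Longrightarrow> sorted_list_of_set {a,b} = [a,(b::nat)]"
  by (rule sorted_eq) auto

lemma card_pairD: "j \<ge> 1 \<Longrightarrow> card (pairD j) = 2"
  unfolding pairD_def by auto

lemma det_submat_pair: assumes "j \<ge> 1" "a < b"
  shows "det (submat Ot (pairD j) {a,b}) = Ot $$ (2*j-1-1, a-1) * Ot $$ (2*j-1, b-1) - Ot $$ (2*j-1-1, b-1) * Ot $$ (2*j-1, a-1)"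
proof -
  have c1: "card (pairD j) = 2" using assms(1) by (rule card_pairD)
  have c2: "card {a,b} = 2" using assms by simp
  have M: "submat Ot (pairD j) {a,b} = mat 2 2 (\<lambda>(p,q). Ot $$ ([2*j-1, 2*j]!p - 1, [a,b]!q - 1))"
    by (simp only: submat_def Let_def c1 c2 sorted_pairD[OF assms(1)] sorted_pair[OF assms(2)])
  have c: "mat 2 2 (\<lambda>(p,q). Ot $$ ([2*j-1, 2*j]!p - 1, [a,b]!q - 1)) \<in> carrier_mat 2 2" by simp
  have e: "2*j-1-1 = 2*j-2" by simp
  show ?thesis unfolding M det2[OF c] by simp
qed

context osetup begin

lemma gammaS_pair: "a < b \<Longrightarrow> a \<ge> 1 \<Longrightarrow> b \<le> 2*n \<Longrightarrow> gammaS n \<gamma> {a,b} = \<i> \<cdot>\<^sub>m (\<gamma> a * \<gamma> b)"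
proof -
  assume a: "a < b" "a \<ge> 1" "b \<le> 2*n"
  have "card {a,b} = 2" using a by simp
  then have "gammaS n \<gamma> {a,b} = \<i> ^ (2 choose 2) \<cdot>\<^sub>m foldr (\<lambda>j M. \<gamma> j * M) [a,b] (1\<^sub>m N)"
    unfolding gammaS_def using a by (simp only: sorted_pair)
  then show ?thesis using a by (simp add: right_mult_one_mat[of _ N N])
qed

definition Aop :: "nat set \<Rightarrow> nat \<Rightarrow> complex mat" where
  "Aop X j = \<i> \<cdot>\<^sub>m (u X (2*j-1) * u X (2*j))"

lemma Aop_car[simp]: "Aop X j \<in> carrier_mat N N" by (simp add: Aop_def)

lemma GR_sum: assumes j: "j \<in> {1..n}" and X: "X \<subseteq> {1..2*n}"
  shows "msum N (\<lambda>S. (of_int (xS X S) * complex_of_real (det (submat Ot (pairD j) S))) \<cdot>\<^sub>m gammaS n \<gamma> S) (SS n 2)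
    = Aop X j"
proof -
  let ?h = "\<lambda>p::nat\<times>nat. {fst p, snd p}"
  have fX: "finite X" using X finite_subset by blast
  have img: "SS n 2 = ?h ` Lt"
  proof
    show "?h ` Lt \<subseteq> SS n 2" by (auto simp: SS_def)
  next
    show "SS n 2 \<subseteq> ?h ` Lt"
    proof
      fix S assume "S \<in> SS n 2"
      then have S: "S \<subseteq> {1..2*n}" "card S = 2" by (auto simp: SS_def)
      then obtain x y where xy: "S = {x,y}" "x \<noteq> y" by (meson card_2_iff)
      show "S \<in> ?h ` Lt"
      proof (cases "x < y")
        case True
        then have "(x,y) \<in> Lt" using xy S by auto
        moreover have "S = ?h (x,y)" using xy by simp
        ultimately show ?thesis by blast
      next
        case False then have "y < x" using xy by simp
        then have "(y,x) \<in> Lt" using xy S by auto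
        moreover have "S = ?h (y,x)" using xy by auto
        ultimately show ?thesis by blast
      qed
    qed
  qed
  have inj: "inj_on ?h Lt"
    by (auto simp: inj_on_def doubleton_eq_iff)
  have r: "2*j-1 \<in> {1..2*n}" "2*j \<in> {1..2*n}" "2*j-1 \<noteq> 2*j" using j by auto
  have "msum N (\<lambda>S. (of_int (xS X S) * complex_of_real (det (submat Ot (pairD j) S))) \<cdot>\<^sub>m gammaS n \<gamma> S) (SS n 2)
     = msum N (\<lambda>p. \<i> \<cdot>\<^sub>m ((cc X (2*j-1) (fst p) * cc X (2*j) (snd p) - cc X (2*j-1) (snd p) * cc X (2*j) (fst p))
      \<cdot>\<^sub>m (\<gamma> (fst p) * \<gamma> (snd p)))) Lt"
    unfolding img
  proof (subst msum_reindex[OF inj], rule msum_cong)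
    fix p assume p: "p \<in> Lt"
    obtain a b where ab: "p = (a,b)" by (cases p)
    have a: "a < b" "a \<ge> 1" "b \<le> 2*n" "a \<noteq> b" using p ab by auto
    have j1: "j \<ge> 1" "2*j-2 = 2*j-1-1" using j by auto
    show "((\<lambda>S. (of_int (xS X S) * complex_of_real (det (submat Ot (pairD j) S))) \<cdot>\<^sub>m gammaS n \<gamma> S) \<circ> ?h) p =
      \<i> \<cdot>\<^sub>m ((cc X (2*j-1) (fst p) * cc X (2*j) (snd p) - cc X (2*j-1) (snd p) * cc X (2*j) (fst p))
      \<cdot>\<^sub>m (\<gamma> (fst p) * \<gamma> (snd p)))"
      unfolding ab using a j1
      by (simp add: xS_pair[OF a(4) fX] det_submat_pair gammaS_pair smult_smult_mat cc_def algebra_simps)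
  qed
  also have "\<dots> = \<i> \<cdot>\<^sub>m (u X (2*j-1) * u X (2*j))"
    unfolding uu[OF r] by (rule msum_smult) auto
  finally show ?thesis unfolding Aop_def .
qed

lemma G_R_eq: assumes "j \<in> {1..n}" "X \<subseteq> {1..2*n}"
  shows "G_R n \<gamma> Ot (pairD j) q X = (1 / 2 ^ (2*n+1)) \<cdot>\<^sub>m (1\<^sub>m N + of_int q \<cdot>\<^sub>m Aop X j)"
  unfolding G_R_def GR_sum[OF assms] ..

end


lemma nth_bij: "distinct xs \<Longrightarrow> bij_betw (nth xs) {0..<length xs} (set xs)"
  by (rule bij_betw_nth) (auto simp: lessThan_atLeast0)

context osetup begin

definition hperm :: "nat list \<Rightarrow> nat list \<Rightarrow> (nat \<Rightarrow> nat) \<Rightarrow> nat \<Rightarrow> nat" where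
  "hperm rs ss p = restrict (\<lambda>r. ss ! p (the_inv_into {0..<length rs} (nth rs) r)) (set rs)"

lemma perm_reindex:
  assumes drs: "distinct rs" and dss: "distinct ss" and len: "length rs = length ss"
    and sI: "set ss \<subseteq> {1..2*n}"
  shows "msum N (\<lambda>f. (\<Prod>r\<in>set rs. complex_of_real (Ot $$ (r-1, f r - 1))) \<cdot>\<^sub>m mprod N (map (\<lambda>r. \<gamma> (f r)) rs))
      {f \<in> PiE (set rs) (\<lambda>_. {1..2*n}). bij_betw f (set rs) (set ss)}
    = msum N (\<lambda>p. (of_int (sign p) * (\<Prod>i = 0..<length rs. complex_of_real (Ot $$ (rs!i - 1, ss!(p i) - 1)))) \<cdot>\<^sub>m mprod N (map \<gamma> ss))
      {p. p permutes {0..<length rs}}"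
proof -
  define m where "m = length rs"
  define io where "io = the_inv_into {0..<m} (nth rs)"
  define is' where "is' = the_inv_into {0..<m} (nth ss)"
  have brs: "bij_betw (nth rs) {0..<m} (set rs)" unfolding m_def by (rule nth_bij[OF drs])
  have bss: "bij_betw (nth ss) {0..<m} (set ss)" unfolding m_def len by (rule nth_bij[OF dss])
  have io1: "\<And>r. r \<in> set rs \<Longrightarrow> io r < m \<and> rs ! (io r) = r"
    using brs unfolding io_def bij_betw_def
    by (metis atLeastLessThan_iff f_the_inv_into_f the_inv_into_into subset_refl)
  have io2: "\<And>i. i < m \<Longrightarrow> io (rs ! i) = i"
    using brs unfolding io_def bij_betw_def by (simp add: the_inv_into_f_f)
  have is1: "\<And>a. a \<in> set ss \<Longrightarrow> is' a < m \<and> ss ! (is' a) = a"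
    using bss unfolding is'_def bij_betw_def
    by (metis atLeastLessThan_iff f_the_inv_into_f the_inv_into_into subset_refl)
  have is2: "\<And>i. i < m \<Longrightarrow> is' (ss ! i) = i"
    using bss unfolding is'_def bij_betw_def by (simp add: the_inv_into_f_f)
  have hdef: "\<And>p. hperm rs ss p = restrict (\<lambda>r. ss ! p (io r)) (set rs)"
    unfolding hperm_def io_def m_def ..
  let ?P = "{p. p permutes {0..<m}}"
  let ?B = "{f \<in> PiE (set rs) (\<lambda>_. {1..2*n}). bij_betw f (set rs) (set ss)}"
  have pm: "\<And>p i. p \<in> ?P \<Longrightarrow> i < m \<Longrightarrow> p i < m" by (simp add: permutes_in_image)
  have hrs: "\<And>p i. i < m \<Longrightarrow> hperm rs ss p (rs ! i) = ss ! p i"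
    using io2 by (simp add: hdef m_def)
  have inj: "inj_on (hperm rs ss) ?P"
  proof (rule inj_onI)
    fix p q assume p: "p \<in> ?P" and q: "q \<in> ?P" and e: "hperm rs ss p = hperm rs ss q"
    show "p = q"
    proof
      fix i show "p i = q i"
      proof (cases "i < m")
        case True
        then have "ss ! p i = ss ! q i" using hrs e by metis
        then show ?thesis using dss pm[OF p True] pm[OF q True] len unfolding m_def
          by (simp add: nth_eq_iff_index_eq)
      next
        case False
        then show ?thesis using p q by (simp add: permutes_def)
      qed
    qed
  qed
  have img: "hperm rs ss ` ?P = ?B"
  proof
    show "hperm rs ss ` ?P \<subseteq> ?B"
    proof
      fix f assume "f \<in> hperm rs ss ` ?P"
      then obtain p where p: "p \<in> ?P" and f: "f = hperm rs ss p" by auto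
      have bp: "bij_betw p {0..<m} {0..<m}" using p by (simp add: permutes_imp_bij)
      have bio: "bij_betw io (set rs) {0..<m}" unfolding io_def using brs by (rule bij_betw_the_inv_into)
      have "bij_betw (\<lambda>r. ss ! p (io r)) (set rs) (set ss)"
        using bij_betw_trans[OF bij_betw_trans[OF bio bp] bss] by (simp add: comp_def)
      then have "bij_betw f (set rs) (set ss)" unfolding f hdef
        by (rule bij_betw_cong[THEN iffD1, rotated]) simp
      moreover have "f \<in> PiE (set rs) (\<lambda>_. {1..2*n})"
      proof -
        have "\<And>r. r \<in> set rs \<Longrightarrow> ss ! p (io r) \<in> {1..2*n}"
          using io1 pm[OF p] sI len unfolding m_def by (metis nth_mem subsetD)
        then show ?thesis unfolding f hdef by auto
      qed
      ultimately show "f \<in> ?B" by simp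
    qed
  next
    show "?B \<subseteq> hperm rs ss ` ?P"
    proof
      fix f assume f: "f \<in> ?B"
      then have fP: "f \<in> PiE (set rs) (\<lambda>_. {1..2*n})" and bf: "bij_betw f (set rs) (set ss)" by auto
      define p where "p i = (if i < m then is' (f (rs ! i)) else i)" for i
      have bis: "bij_betw is' (set ss) {0..<m}" unfolding is'_def using bss by (rule bij_betw_the_inv_into)
      have "bij_betw (\<lambda>i. is' (f (rs ! i))) {0..<m} {0..<m}"
        using bij_betw_trans[OF bij_betw_trans[OF brs bf] bis] by (simp add: comp_def)
      then have "bij_betw p {0..<m} {0..<m}" unfolding p_def
        by (rule bij_betw_cong[THEN iffD1, rotated]) simp
      then have pP: "p \<in> ?P" by (auto intro!: bij_imp_permutes simp: p_def)
      have "hperm rs ss p = f"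
      proof
        fix r show "hperm rs ss p r = f r"
        proof (cases "r \<in> set rs")
          case True
          then have "io r < m" "rs ! io r = r" using io1 by auto
          moreover have "f r \<in> set ss" using bf True by (auto simp: bij_betw_def)
          ultimately show ?thesis using True is1 by (simp add: hdef p_def)
        next
          case False then show ?thesis using fP by (simp add: hdef PiE_def extensional_def)
        qed
      qed
      then show "f \<in> hperm rs ss ` ?P" using pP by blast
    qed
  qed
  have tm: "\<And>p. p \<in> ?P \<Longrightarrow>
     (\<Prod>r\<in>set rs. complex_of_real (Ot $$ (r-1, hperm rs ss p r - 1))) \<cdot>\<^sub>m mprod N (map (\<lambda>r. \<gamma> (hperm rs ss p r)) rs)
     = (of_int (sign p) * (\<Prod>i = 0..<m. complex_of_real (Ot $$ (rs!i - 1, ss!(p i) - 1)))) \<cdot>\<^sub>m mprod N (map \<gamma> ss)"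
  proof -
    fix p assume p: "p \<in> ?P"
    have pr: "(\<Prod>r\<in>set rs. complex_of_real (Ot $$ (r-1, hperm rs ss p r - 1))) = (\<Prod>i = 0..<m. complex_of_real (Ot $$ (rs!i - 1, ss!(p i) - 1)))"
      using prod.reindex_bij_betw[OF brs, of "\<lambda>r. complex_of_real (Ot $$ (r-1, hperm rs ss p r - 1))"] hrs
      by simp
    have "map (\<lambda>r. \<gamma> (hperm rs ss p r)) rs = map (\<lambda>i. \<gamma> (hperm rs ss p (rs ! i))) [0..<m]"
      unfolding m_def by (subst map_nth[symmetric, of rs]) (simp only: map_map comp_def)
    also have "\<dots> = map \<gamma> (map (\<lambda>i. ss ! p i) [0..<m])" using hrs by simp
    finally have mp: "mprod N (map (\<lambda>r. \<gamma> (hperm rs ss p r)) rs) = of_int (sign p) \<cdot>\<^sub>m mprod N (map \<gamma> ss)"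
      using gperm[OF dss sI, of m p] p len unfolding m_def by simp
    show "?thesis p" unfolding pr mp by (simp add: smult_smult_mat mult.commute)
  qed
  have "msum N (\<lambda>f. (\<Prod>r\<in>set rs. complex_of_real (Ot $$ (r-1, f r - 1))) \<cdot>\<^sub>m mprod N (map (\<lambda>r. \<gamma> (f r)) rs)) ?B
     = msum N (\<lambda>f. (\<Prod>r\<in>set rs. complex_of_real (Ot $$ (r-1, f r - 1))) \<cdot>\<^sub>m mprod N (map (\<lambda>r. \<gamma> (f r)) rs)) (hperm rs ss ` ?P)"
    unfolding img ..
  also have "\<dots> = msum N (\<lambda>p. (of_int (sign p) * (\<Prod>i = 0..<m. complex_of_real (Ot $$ (rs!i - 1, ss!(p i) - 1)))) \<cdot>\<^sub>m mprod N (map \<gamma> ss)) ?P"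
    by (subst msum_reindex[OF inj]) (rule msum_cong, unfold comp_def, rule tm, simp)
  finally show ?thesis unfolding m_def .
qed

end


lemma msum_double:
  assumes "finite A" "finite B" "\<And>f. f \<in> B \<Longrightarrow> M f \<in> carrier_mat N N"
  shows "msum N (\<lambda>X. w X \<cdot>\<^sub>m (c \<cdot>\<^sub>m msum N (\<lambda>f. g X f \<cdot>\<^sub>m M f) B)) A =
    c \<cdot>\<^sub>m msum N (\<lambda>f. (\<Sum>X\<in>A. w X * g X f) \<cdot>\<^sub>m M f) B"
proof (rule eq_matI)
  fix i j assume ij: "i < dim_row (c \<cdot>\<^sub>m msum N (\<lambda>f. (\<Sum>X\<in>A. w X * g X f) \<cdot>\<^sub>m M f) B)"
    "j < dim_col (c \<cdot>\<^sub>m msum N (\<lambda>f. (\<Sum>X\<in>A. w X * g X f) \<cdot>\<^sub>m M f) B)"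
  then have ij': "i < N" "j < N" by auto
  have Mij: "\<And>f x. f \<in> B \<Longrightarrow> (x \<cdot>\<^sub>m M f) $$ (i,j) = x * M f $$ (i,j)"
    using assms(3) ij' by (metis carrier_matD(1) carrier_matD(2) index_smult_mat(1))
  have "msum N (\<lambda>X. w X \<cdot>\<^sub>m (c \<cdot>\<^sub>m msum N (\<lambda>f. g X f \<cdot>\<^sub>m M f) B)) A $$ (i,j)
     = (\<Sum>X\<in>A. w X * (c * (\<Sum>f\<in>B. g X f * M f $$ (i,j))))"
    using ij' Mij by (simp add: msum_def)
  also have "\<dots> = c * (\<Sum>f\<in>B. (\<Sum>X\<in>A. w X * g X f) * M f $$ (i,j))"
    by (simp add: sum_distrib_left sum_distrib_right mult.assoc mult.left_commute) (rule sum.swap)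
  also have "\<dots> = (c \<cdot>\<^sub>m msum N (\<lambda>f. (\<Sum>X\<in>A. w X * g X f) \<cdot>\<^sub>m M f) B) $$ (i,j)"
    using ij' Mij by (simp add: msum_def)
  finally show "msum N (\<lambda>X. w X \<cdot>\<^sub>m (c \<cdot>\<^sub>m msum N (\<lambda>f. g X f \<cdot>\<^sub>m M f) B)) A $$ (i,j) =
    (c \<cdot>\<^sub>m msum N (\<lambda>f. (\<Sum>X\<in>A. w X * g X f) \<cdot>\<^sub>m M f) B) $$ (i,j)" .
qed simp_all

lemma concat_sorted: "sorted_wrt (<) js \<Longrightarrow> (\<forall>j\<in>set js. j \<ge> 1) \<Longrightarrow>
  sorted_wrt (<) (concat (map (\<lambda>j. [2*j-1, 2*j::nat]) js))"
proof (induction js)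
  case (Cons j js)
  have "\<forall>y\<in>set (concat (map (\<lambda>j. [2*j-1, 2*j::nat]) js)). 2*j < y"
    using Cons.prems by auto
  then show ?case using Cons by (auto simp: sorted_wrt_append)
qed simp

lemma set_concat_pair: "set (concat (map (\<lambda>j. [2*j-1, 2*j::nat]) js)) = \<Union>(pairD ` set js)"
  by (auto simp: pairD_def)

lemma rs_eq: assumes "J \<subseteq> {1..n}"
  shows "sorted_list_of_set (\<Union>(pairD ` J)) = concat (map (\<lambda>j. [2*j-1, 2*j]) (sorted_list_of_set J))"
proof -
  have fJ: "finite J" using assms finite_subset by blast
  have st: "sorted_wrt (<) (concat (map (\<lambda>j. [2*j-1, 2*j]) (sorted_list_of_set J)))"
    using assms fJ by (intro concat_sorted) auto
  show ?thesis
    by (rule sorted_eq) (use st fJ in \<open>auto simp: strict_sorted_iff set_concat_pair pairD_def\<close>)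
qed

lemma filter_sorted: "J \<subseteq> {1..n} \<Longrightarrow> filter (\<lambda>j. j \<in> J) [1..<n+1] = sorted_list_of_set J"
proof -
  assume J: "J \<subseteq> {1..n}"
  have s: "sorted (filter (\<lambda>j. j\<in>J) [1..<n+1])" using sorted_upt[of 1 "n+1"] by (rule sorted_wrt_filter)
  have d: "distinct (filter (\<lambda>j. j\<in>J) [1..<n+1])" by simp
  have e: "set (filter (\<lambda>j. j\<in>J) [1..<n+1]) = J" using J by auto
  have f: "finite J" using J finite_subset by blast
  show ?thesis by (rule sym, rule sorted_eq[OF f s d e])
qed

lemma i_pow: "\<i> ^ (2*k choose 2) = \<i> ^ k"
proof -
  have c: "2*k choose 2 = k + 2 * (k * (k - 1))"
    by (cases k) (auto simp: choose_two algebra_simps)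
  have "even (k * (k-1))" by auto
  then obtain t where t: "k * (k-1) = 2 * t" by blast
  have "\<i> ^ (2*k choose 2) = \<i> ^ k * (\<i> ^ 4) ^ t" unfolding c t by (simp add: power_add power_mult)
  then show ?thesis by simp
qed

context osetup begin

definition FJ :: "nat set \<Rightarrow> nat set \<Rightarrow> complex mat" where
  "FJ J X = foldr (\<lambda>j M. (if j \<in> J then Aop X j else 1\<^sub>m N) * M) [1..<n+1] (1\<^sub>m N)"

lemma foldr_filter: "foldr (\<lambda>j M. (if j \<in> J then Aop X j else 1\<^sub>m N) * M) L (1\<^sub>m N)
   = foldr (\<lambda>j M. Aop X j * M) (filter (\<lambda>j. j \<in> J) L) (1\<^sub>m N)"
proof (induction L)
  case (Cons a L)
  have c: "foldr (\<lambda>j M. Aop X j * M) (filter (\<lambda>j. j \<in> J) L) (1\<^sub>m N) \<in> carrier_mat N N"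
    by (rule foldr_car) auto
  show ?case using Cons c by (simp add: left_mult_one_mat[of _ N N])
qed simp

lemma foldr_Aop: "foldr (\<lambda>j M. Aop X j * M) js (1\<^sub>m N) =
   (\<i> ^ length js) \<cdot>\<^sub>m mprod N (map (u X) (concat (map (\<lambda>j. [2*j-1, 2*j]) js)))"
proof (induction js)
  case (Cons j js)
  have c: "mprod N (map (u X) (concat (map (\<lambda>j. [2*j-1, 2*j]) js))) \<in> carrier_mat N N"
    by (rule mprod_carrier) auto
  show ?case using Cons c by (simp add: Aop_def sqs mult.commute)
qed simp

lemma FJ_eq: assumes "J \<subseteq> {1..n}"
  shows "FJ J X = (\<i> ^ card J) \<cdot>\<^sub>m mprod N (map (u X) (sorted_list_of_set (\<Union>(pairD ` J))))"
  unfolding FJ_def foldr_filter filter_sorted[OF assms] foldr_Aop rs_eq[OF assms] by simp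

lemma xS_prod: assumes "X \<subseteq> {1..2*n}" "card S = 2*k" "k \<ge> 1" "finite S"
  shows "complex_of_int (xS X S) = (\<Prod>a\<in>S. sig X a)"
proof -
  have fX: "finite X" using assms(1) finite_subset by blast
  have le: "card (S \<inter> X) \<le> 2 * (card X * k)"
  proof -
    have "card (S \<inter> X) \<le> card X" using card_mono[OF fX] by auto
    also have "\<dots> \<le> 2 * (card X * k)" using assms(3) by (simp add: mult_le_mono)
    finally show ?thesis .
  qed
  have "xS X S = (-1)^(2 * (card X * k) - card (S \<inter> X))"
    unfolding xS_def assms(2) by (simp add: algebra_simps)
  also have "\<dots> = (-1)^card (S \<inter> X)" by (rule neg1_pow_diff[OF le])
  finally have e: "xS X S = (-1)^card (S \<inter> X)" .
  have "(\<Prod>a\<in>S. sig X a) = (\<Prod>a\<in>S \<inter> X. -1)"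
    using prod.inter_restrict[OF assms(4), of "\<lambda>_. -1::complex" X] by (simp add: sig_def if_distrib)
  also have "\<dots> = (-1)^card (S \<inter> X)" by simp
  finally show ?thesis using e by simp
qed

end


lemma length_concat_pair: "length (concat (map (\<lambda>j. [2*j-1, 2*j::nat]) js)) = 2 * length js"
  by (induction js) auto

lemma zero_smult_car: "M \<in> carrier_mat N N \<Longrightarrow> (0::complex) \<cdot>\<^sub>m M = 0\<^sub>m N N"
  by (rule eq_matI) auto

context osetup begin

lemma Xsum: assumes J: "J \<subseteq> {1..n}" "card J = k" "k \<ge> 1" and S: "S \<in> SS n (2*k)" and R: "R = \<Union>(pairD ` J)"
  shows "msum N (\<lambda>X. of_int (xS X S) \<cdot>\<^sub>m FJ J X) (Pow {1..2*n})
     = (2^(2*n) * complex_of_real (det (submat Ot R S))) \<cdot>\<^sub>m gammaS n \<gamma> S"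
proof -
  let ?I = "{1..2*n}"
  define rs where "rs = sorted_list_of_set R"
  define ss where "ss = sorted_list_of_set S"
  define m where "m = 2*k"
  have SI: "S \<subseteq> ?I" and cS: "card S = m" using S by (auto simp: SS_def m_def)
  have fS: "finite S" using SI finite_subset by blast
  have fJ: "finite J" using J(1) finite_subset by blast
  have RI: "R \<subseteq> ?I"
  proof
    fix x assume "x \<in> R"
    then obtain j where j: "j \<in> J" "x \<in> pairD j" unfolding R by auto
    then have "j \<ge> 1" "j \<le> n" using J(1) by auto
    then show "x \<in> ?I" using j(2) by (auto simp: pairD_def)
  qed
  have fR: "finite R" using RI finite_subset by blast
  have lrs: "length rs = m" unfolding rs_def R rs_eq[OF J(1)] m_def length_concat_pair
    by (simp add: J(2))
  have drs: "distinct rs" "set rs = R" unfolding rs_def using fR by auto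
  have dss: "distinct ss" "set ss = S" "length ss = m" unfolding ss_def using fS cS by auto
  have cR: "card R = m" using lrs drs by (metis distinct_card)
  define M where "M f = mprod N (map (\<lambda>r. \<gamma> (f r)) rs)" for f
  define P where "P f = (\<Prod>r\<in>set rs. complex_of_real (Ot $$ (r-1, f r - 1)))" for f
  let ?Bpi = "PiE (set rs) (\<lambda>_. ?I)"
  have finB: "finite ?Bpi" by (simp add: finite_PiE)
  have cM: "\<And>f. f \<in> ?Bpi \<Longrightarrow> M f \<in> carrier_mat N N"
    unfolding M_def by (rule mprod_carrier) (auto simp: PiE_iff)
  have step1: "\<And>X. FJ J X = (\<i> ^ k) \<cdot>\<^sub>m msum N (\<lambda>f. (\<Prod>r\<in>set rs. cc X r (f r)) \<cdot>\<^sub>m M f) ?Bpi"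
  proof -
    fix X
    have "mprod N (map (u X) rs) = mprod N (map (\<lambda>r. msum N (\<lambda>a. cc X r a \<cdot>\<^sub>m \<gamma> a) ?I) rs)"
      by (intro arg_cong[where f="mprod N"] map_cong) (simp_all add: u_def)
    also have "\<dots> = msum N (\<lambda>f. (\<Prod>r\<in>set rs. cc X r (f r)) \<cdot>\<^sub>m M f) ?Bpi"
      unfolding M_def by (rule mprod_msum_expand[OF drs(1)]) (auto intro: gcar0)
    finally show "?thesis X" using FJ_eq[OF J(1), of X] J(2) unfolding rs_def R by simp
  qed
  have step3: "\<And>f. f \<in> ?Bpi \<Longrightarrow> (\<Sum>X\<in>Pow ?I. of_int (xS X S) * (\<Prod>r\<in>set rs. cc X r (f r)))
      = P f * (if bij_betw f (set rs) S then 2^(2*n) else 0)"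
  proof -
    fix f assume f: "f \<in> ?Bpi"
    have "(\<Sum>X\<in>Pow ?I. of_int (xS X S) * (\<Prod>r\<in>set rs. cc X r (f r)))
       = (\<Sum>X\<in>Pow ?I. P f * ((\<Prod>a\<in>S. sig X a) * (\<Prod>r\<in>set rs. sig X (f r))))"
    proof (rule sum.cong)
      fix X assume X: "X \<in> Pow ?I"
      have "of_int (xS X S) = (\<Prod>a\<in>S. sig X a)"
        using xS_prod[of X S k] X cS J(3) fS unfolding m_def by auto
      moreover have "(\<Prod>r\<in>set rs. cc X r (f r)) = P f * (\<Prod>r\<in>set rs. sig X (f r))"
        unfolding cc_def P_def by (simp add: prod.distrib)
      ultimately show "of_int (xS X S) * (\<Prod>r\<in>set rs. cc X r (f r)) = P f * ((\<Prod>a\<in>S. sig X a) * (\<Prod>r\<in>set rs. sig X (f r)))"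
        by (simp add: algebra_simps)
    qed simp
    also have "\<dots> = P f * (\<Sum>X\<in>Pow ?I. (\<Prod>a\<in>S. sig X a) * (\<Prod>r\<in>set rs. sig X (f r)))"
      by (simp add: sum_distrib_left)
    also have "(\<Sum>X\<in>Pow ?I. (\<Prod>a\<in>S. sig X a) * (\<Prod>r\<in>set rs. sig X (f r))) = (if bij_betw f (set rs) S then 2^card ?I else 0)"
      by (rule parity_sum) (use SI f cS lrs drs in \<open>auto simp: PiE_iff distinct_card\<close>)
    finally show "(\<Sum>X\<in>Pow ?I. of_int (xS X S) * (\<Prod>r\<in>set rs. cc X r (f r))) = P f * (if bij_betw f (set rs) S then 2^(2*n) else 0)"
      by simp
  qed
  have "msum N (\<lambda>X. of_int (xS X S) \<cdot>\<^sub>m FJ J X) (Pow ?I)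
      = msum N (\<lambda>X. of_int (xS X S) \<cdot>\<^sub>m ((\<i> ^ k) \<cdot>\<^sub>m msum N (\<lambda>f. (\<Prod>r\<in>set rs. cc X r (f r)) \<cdot>\<^sub>m M f) ?Bpi)) (Pow ?I)"
    using step1 by simp
  also have "\<dots> = (\<i> ^ k) \<cdot>\<^sub>m msum N (\<lambda>f. (\<Sum>X\<in>Pow ?I. of_int (xS X S) * (\<Prod>r\<in>set rs. cc X r (f r))) \<cdot>\<^sub>m M f) ?Bpi"
    by (rule msum_double) (use finB cM in auto)
  also have "msum N (\<lambda>f. (\<Sum>X\<in>Pow ?I. of_int (xS X S) * (\<Prod>r\<in>set rs. cc X r (f r))) \<cdot>\<^sub>m M f) ?Bpi
      = msum N (\<lambda>f. 2^(2*n) \<cdot>\<^sub>m (if bij_betw f (set rs) S then P f \<cdot>\<^sub>m M f else 0\<^sub>m N N)) ?Bpi"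
  proof (rule msum_cong)
    fix f assume f: "f \<in> ?Bpi"
    show "(\<Sum>X\<in>Pow ?I. of_int (xS X S) * (\<Prod>r\<in>set rs. cc X r (f r))) \<cdot>\<^sub>m M f =
      2^(2*n) \<cdot>\<^sub>m (if bij_betw f (set rs) S then P f \<cdot>\<^sub>m M f else 0\<^sub>m N N)"
      unfolding step3[OF f] using cM[OF f]
      by (auto simp: smult_smult_mat mult.commute zero_smult_car)
  qed
  also have "\<dots> = 2^(2*n) \<cdot>\<^sub>m msum N (\<lambda>f. P f \<cdot>\<^sub>m M f) {f \<in> ?Bpi. bij_betw f (set rs) S}"
    using cM by (subst msum_if[OF finB]) (rule msum_smult, auto)
  also have "msum N (\<lambda>f. P f \<cdot>\<^sub>m M f) {f \<in> ?Bpi. bij_betw f (set rs) S}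
     = msum N (\<lambda>p. (of_int (sign p) * (\<Prod>i = 0..<length rs. complex_of_real (Ot $$ (rs!i - 1, ss!(p i) - 1)))) \<cdot>\<^sub>m mprod N (map \<gamma> ss))
      {p. p permutes {0..<length rs}}"
    unfolding P_def M_def using perm_reindex[OF drs(1) dss(1)] lrs dss SI by simp
  also have "\<dots> = (\<Sum>p\<in>{p. p permutes {0..<m}}. of_int (sign p) * (\<Prod>i = 0..<m. complex_of_real (Ot $$ (rs!i - 1, ss!(p i) - 1)))) \<cdot>\<^sub>m mprod N (map \<gamma> ss)"
    unfolding lrs by (rule msum_scalar) (use dss SI in simp)
  also have "(\<Sum>p\<in>{p. p permutes {0..<m}}. of_int (sign p) * (\<Prod>i = 0..<m. complex_of_real (Ot $$ (rs!i - 1, ss!(p i) - 1))))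
     = complex_of_real (det (submat Ot R S))"
  proof -
    have c: "submat Ot R S \<in> carrier_mat m m" using cR cS by (simp add: submat_def Let_def)
    have "det (submat Ot R S) = (\<Sum>p\<in>{p. p permutes {0..<m}}. signof p * (\<Prod>i = 0..<m. submat Ot R S $$ (i, p i)))"
      by (rule det_def'[OF c])
    also have "\<dots> = (\<Sum>p\<in>{p. p permutes {0..<m}}. of_int (sign p) * (\<Prod>i = 0..<m. Ot $$ (rs!i - 1, ss!(p i) - 1)))"
    proof (rule sum.cong)
      fix p assume p: "p \<in> {p. p permutes {0..<m}}"
      have "\<And>i. i \<in> {0..<m} \<Longrightarrow> submat Ot R S $$ (i, p i) = Ot $$ (rs!i - 1, ss!(p i) - 1)"
        using p cR cS unfolding rs_def ss_def by (auto simp: submat_def Let_def permutes_in_image)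
      then show "signof p * (\<Prod>i = 0..<m. submat Ot R S $$ (i, p i)) = of_int (sign p) * (\<Prod>i = 0..<m. Ot $$ (rs!i - 1, ss!(p i) - 1))"
        by simp
    qed simp
    finally show ?thesis by simp
  qed
  finally have L: "msum N (\<lambda>X. of_int (xS X S) \<cdot>\<^sub>m FJ J X) (Pow ?I) =
     (\<i> ^ k) \<cdot>\<^sub>m (2^(2*n) \<cdot>\<^sub>m (complex_of_real (det (submat Ot R S)) \<cdot>\<^sub>m mprod N (map \<gamma> ss)))" .
  have g: "gammaS n \<gamma> S = (\<i> ^ k) \<cdot>\<^sub>m mprod N (map \<gamma> ss)"
    unfolding gammaS_def cS m_def i_pow ss_def[symmetric] mprod_def by (simp add: foldr_map comp_def)
  show ?thesis unfolding L g by (simp add: smult_smult_mat algebra_simps)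
qed

end


context osetup begin

lemma gammaS_car: assumes "S \<subseteq> {1..2*n}" "finite S" shows "gammaS n \<gamma> S \<in> carrier_mat N N"
proof -
  have "foldr (\<lambda>j M. \<gamma> j * M) (sorted_list_of_set S) (1\<^sub>m N) \<in> carrier_mat N N"
    by (rule foldr_car) (use assms gcar0 in auto)
  then show ?thesis unfolding gammaS_def by simp
qed

lemma Gop_eq: assumes "X \<subseteq> {1..2*n}"
  shows "G_op n \<gamma> Ot q X = ((2 ^ (2*n)) ^ (n - 1)) \<cdot>\<^sub>m
     foldr (\<lambda>j M. ((1 / 2 ^ (2*n+1)) \<cdot>\<^sub>m (1\<^sub>m N + of_int (q j) \<cdot>\<^sub>m Aop X j)) * M) [1..<n+1] (1\<^sub>m N)"
  unfolding G_op_def by (rule arg_cong[where f="\<lambda>M. _ \<cdot>\<^sub>m M"], rule foldr_cong) (auto simp: G_R_eq[OF _ assms])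

lemma setL: "set [1..<n+1] = {1..n}" by auto

lemma outsum: assumes J0: "J0 \<subseteq> {1..n}"
  shows "msum N (\<lambda>(q,X). (w X * of_int (\<Prod>j\<in>J0. q j)) \<cdot>\<^sub>m G_op n \<gamma> Ot q X) (outcomes n)
    = ((2 ^ (2*n)) ^ (n - 1) * (2 * (1 / 2 ^ (2*n+1))) ^ n) \<cdot>\<^sub>m msum N (\<lambda>X. w X \<cdot>\<^sub>m FJ J0 X) (Pow {1..2*n})"
proof -
  let ?Q = "PiE {1..n} (\<lambda>_. {-1, 1::int})"
  let ?c = "1 / 2 ^ (2*n+1) :: complex"
  let ?K1 = "(2 ^ (2*n)) ^ (n - 1) :: complex"
  have finQ: "finite ?Q" by (simp add: finite_PiE)
  have "msum N (\<lambda>(q,X). (w X * of_int (\<Prod>j\<in>J0. q j)) \<cdot>\<^sub>m G_op n \<gamma> Ot q X) (outcomes n)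
     = msum N (\<lambda>q. msum N (\<lambda>X. (w X * of_int (\<Prod>j\<in>J0. q j)) \<cdot>\<^sub>m G_op n \<gamma> Ot q X) (Pow {1..2*n})) ?Q"
    unfolding outcomes_def by (subst msum_Sigma) (simp_all add: finite_PiE)
  also have "\<dots> = msum N (\<lambda>X. msum N (\<lambda>q. (w X * of_int (\<Prod>j\<in>J0. q j)) \<cdot>\<^sub>m G_op n \<gamma> Ot q X) ?Q) (Pow {1..2*n})"
    by (rule msum_swap)
  also have "\<dots> = msum N (\<lambda>X. ((2 ^ (2*n)) ^ (n - 1) * (2 * ?c) ^ n) \<cdot>\<^sub>m (w X \<cdot>\<^sub>m FJ J0 X)) (Pow {1..2*n})"
  proof (rule msum_cong)
    fix X assume X: "X \<in> Pow {1..2*n}"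
    define Fq where "Fq q = foldr (\<lambda>j M. (?c \<cdot>\<^sub>m (1\<^sub>m N + of_int (q j) \<cdot>\<^sub>m Aop X j)) * M) [1..<n+1] (1\<^sub>m N)" for q
    have cF: "\<And>q. Fq q \<in> carrier_mat N N" unfolding Fq_def by (rule foldr_car) auto
    have "msum N (\<lambda>q. (w X * of_int (\<Prod>j\<in>J0. q j)) \<cdot>\<^sub>m G_op n \<gamma> Ot q X) ?Q
       = msum N (\<lambda>q. (w X * ?K1) \<cdot>\<^sub>m (of_int (\<Prod>j\<in>set [1..<n+1] \<inter> J0. q j) \<cdot>\<^sub>m Fq q)) ?Q"
    proof (rule msum_cong)
      fix q assume "q \<in> ?Q"
      have "set [1..<n+1] \<inter> J0 = J0" using J0 by auto
      then show "(w X * of_int (\<Prod>j\<in>J0. q j)) \<cdot>\<^sub>m G_op n \<gamma> Ot q X = (w X * ?K1) \<cdot>\<^sub>m (of_int (\<Prod>j\<in>set [1..<n+1] \<inter> J0. q j) \<cdot>\<^sub>m Fq q)"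
        using X by (simp add: Gop_eq Fq_def smult_smult_mat algebra_simps del: of_int_prod)
    qed
    also have "\<dots> = (w X * ?K1) \<cdot>\<^sub>m msum N (\<lambda>q. of_int (\<Prod>j\<in>set [1..<n+1] \<inter> J0. q j) \<cdot>\<^sub>m Fq q) (PiE (set [1..<n+1]) (\<lambda>_. {-1, 1::int}))"
      unfolding setL by (rule msum_smult) (simp add: cF)
    also have "msum N (\<lambda>q. of_int (\<Prod>j\<in>set [1..<n+1] \<inter> J0. q j) \<cdot>\<^sub>m Fq q) (PiE (set [1..<n+1]) (\<lambda>_. {-1, 1::int}))
       = ((2 * ?c) ^ length [1..<n+1]) \<cdot>\<^sub>m foldr (\<lambda>j M. (if j \<in> J0 then Aop X j else 1\<^sub>m N) * M) [1..<n+1] (1\<^sub>m N)"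
      unfolding Fq_def by (rule qsum) auto
    finally have "msum N (\<lambda>q. (w X * of_int (\<Prod>j\<in>J0. q j)) \<cdot>\<^sub>m G_op n \<gamma> Ot q X) ?Q
       = (w X * ?K1) \<cdot>\<^sub>m (((2 * ?c) ^ length [1..<n+1]) \<cdot>\<^sub>m FJ J0 X)" unfolding FJ_def .
    then show "msum N (\<lambda>q. (w X * of_int (\<Prod>j\<in>J0. q j)) \<cdot>\<^sub>m G_op n \<gamma> Ot q X) ?Q
       = ((2 ^ (2*n)) ^ (n - 1) * (2 * ?c) ^ n) \<cdot>\<^sub>m (w X \<cdot>\<^sub>m FJ J0 X)"
      by (simp only: length_upt add_diff_cancel_right' smult_smult_mat mult_ac)
  qed
  also have "\<dots> = ((2 ^ (2*n)) ^ (n - 1) * (2 * ?c) ^ n) \<cdot>\<^sub>m msum N (\<lambda>X. w X \<cdot>\<^sub>m FJ J0 X) (Pow {1..2*n})"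
    by (rule msum_smult) (simp add: FJ_def foldr_car)
  finally show ?thesis .
qed

lemma FJ_empty: "FJ {} X = 1\<^sub>m N"
  unfolding FJ_def foldr_filter by simp

lemma Gop_car: "X \<subseteq> {1..2*n} \<Longrightarrow> G_op n \<gamma> Ot q X \<in> carrier_mat N N"
  unfolding Gop_eq by (simp add: foldr_car)

end

lemma Kval: assumes "n \<ge> 1"
  shows "((2::complex) ^ (2*n)) ^ (n - 1) * (2 * (1 / 2 ^ (2*n+1))) ^ n * 2^(2*n) = 1"
proof -
  define x where "x = (2::complex) ^ (2*n)"
  have x0: "x \<noteq> 0" unfolding x_def by simp
  have h: "2 * (1 / 2 ^ (2*n+1)) = 1 / x" unfolding x_def by (simp add: power_add)
  obtain m where m: "n = Suc m" using assms by (cases n) auto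
  have "x ^ (n - 1) * (1 / x) ^ n * x = (x ^ m * x) * (1 / x) ^ Suc m" unfolding m by simp
  also have "\<dots> = x ^ Suc m * (1/x) ^ Suc m" by (simp add: mult.commute)
  also have "\<dots> = 1" by (simp add: power_one_over x0 field_simps)
  finally show ?thesis unfolding h x_def by simp
qed

lemma abs_prod_pm1: "\<forall>j\<in>J. q j \<in> {-1, 1::int} \<Longrightarrow> \<bar>\<Prod>j\<in>J. q j\<bar> = 1"
  by (simp add: abs_prod) (rule prod.neutral, auto)

lemma sgn1_mult: "real_of_int (sgn1 d) * d = \<bar>d\<bar>"
  by (simp add: sgn1_def)

lemma J0_eq: assumes "J \<subseteq> {1..n}" "R = \<Union>(pairD ` J)"
  shows "{j\<in>{1..n}. pairD j \<subseteq> R} = J"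
proof
  show "J \<subseteq> {j\<in>{1..n}. pairD j \<subseteq> R}" using assms by auto
next
  show "{j\<in>{1..n}. pairD j \<subseteq> R} \<subseteq> J"
  proof
    fix j assume j: "j \<in> {j\<in>{1..n}. pairD j \<subseteq> R}"
    then have "2*j \<in> R" by (auto simp: pairD_def)
    then obtain j' where j': "j' \<in> J" "2*j \<in> pairD j'" using assms(2) by auto
    have "j' \<ge> 1" using j' assms(1) by auto
    then have "2*j = 2*j'" using j' by (auto simp: pairD_def)
    then show "j \<in> J" using j' by simp
  qed
qed



theorem proposition2:
  fixes n k :: nat and \<gamma> :: "nat \<Rightarrow> complex mat" and Ot :: "real mat"
    and R S :: "nat set" and e :: int
  assumes "majorana_ops n \<gamma>"
    and "Ot \<in> orth_group (2*n)"
    and "k \<in> {1..n}"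
    and "S \<in> SS n (2*k)"
    and "R \<in> DD n k"
    and "e \<in> {-1, 1}"
  shows "msum (maj_dim n) (\<lambda>(q, X). G_op n \<gamma> Ot q X)
           {(q, X) \<in> outcomes n. eS n Ot R S q X = e}
         = (1/2) \<cdot>\<^sub>m (1\<^sub>m (maj_dim n) +
              (of_int e * complex_of_real \<bar>det (submat Ot R S)\<bar>) \<cdot>\<^sub>m gammaS n \<gamma> S)"
proof -
  interpret osetup n \<gamma> Ot by unfold_locales (use assms in auto)
  obtain J where J: "J \<subseteq> {1..n}" "card J = k" "R = \<Union>(pairD ` J)" using assms(5) by (auto simp: DD_def)
  have k1: "k \<ge> 1" "n \<ge> 1" using assms(3) by auto
  have SI: "S \<subseteq> {1..2*n}" "card S = 2*k" using assms(4) by (auto simp: SS_def)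
  have fS: "finite S" using SI finite_subset by blast
  define d where "d = det (submat Ot R S)"
  have qR: "\<And>q. qR n q R = (\<Prod>j\<in>J. q j)" unfolding qR_def J0_eq[OF J(1) J(3)] ..
  define K where "K = ((2::complex) ^ (2*n)) ^ (n - 1) * (2 * (1 / 2 ^ (2*n+1))) ^ n"
  define w2 where "w2 X = complex_of_int e / 2 * of_int (sgn1 d) * of_int (xS X S)" for X
  let ?G = "\<lambda>(q, X). G_op n \<gamma> Ot q X"
  let ?I = "{1..2*n}"
  have finO: "finite (outcomes n)" by (simp add: outcomes_def finite_PiE)
  have pt: "\<And>x. x \<in> outcomes n \<Longrightarrow> (if (case x of (q, X) \<Rightarrow> eS n Ot R S q X = e) then ?G x else 0\<^sub>m N N)
     = (\<lambda>(q,X). (1/2 * of_int (\<Prod>j\<in>{}. q j)) \<cdot>\<^sub>m G_op n \<gamma> Ot q X) x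
       + (\<lambda>(q,X). (w2 X * of_int (\<Prod>j\<in>J. q j)) \<cdot>\<^sub>m G_op n \<gamma> Ot q X) x"
  proof -
    fix x assume x: "x \<in> outcomes n"
    obtain q X where qX: "x = (q, X)" by (cases x)
    have X: "X \<subseteq> ?I" and q: "\<forall>j\<in>J. q j \<in> {-1, 1}" using x J(1) unfolding qX outcomes_def by (auto simp: PiE_iff)
    have cG: "G_op n \<gamma> Ot q X \<in> carrier_mat N N" using X by (rule Gop_car)
    have a1: "\<bar>sgn1 d\<bar> = 1" by (simp add: sgn1_def)
    have a2: "\<bar>xS X S\<bar> = 1" by (simp add: xS_def power_abs)
    have a3: "\<bar>\<Prod>j\<in>J. q j\<bar> = 1" using q by (rule abs_prod_pm1)
    define E where "E = eS n Ot R S q X"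
    have E: "E = sgn1 d * xS X S * (\<Prod>j\<in>J. q j)" unfolding E_def eS_def qR d_def ..
    have aE: "\<bar>E\<bar> = 1" unfolding E using a1 a2 a3 by (simp add: abs_mult)
    have coef: "1/2 + w2 X * of_int (\<Prod>j\<in>J. q j) = (if E = e then 1 else (0::complex))"
    proof -
      have h: "w2 X * of_int (\<Prod>j\<in>J. q j) = of_int (e * E) / 2" unfolding w2_def E by simp
      have h2: "e * E = (if E = e then 1 else -1)" using aE assms(6) by (auto simp: abs_if split: if_splits)
      show ?thesis unfolding h h2 by (cases "E = e") simp_all
    qed
    have "(1/2 * of_int (\<Prod>j\<in>{}. q j)) \<cdot>\<^sub>m G_op n \<gamma> Ot q X + (w2 X * of_int (\<Prod>j\<in>J. q j)) \<cdot>\<^sub>m G_op n \<gamma> Ot q X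
       = (1/2 + w2 X * of_int (\<Prod>j\<in>J. q j)) \<cdot>\<^sub>m G_op n \<gamma> Ot q X"
      using add_smult_distrib_right_mat[OF cG] by simp
    also have "\<dots> = (if E = e then G_op n \<gamma> Ot q X else 0\<^sub>m N N)" unfolding coef using cG by (simp add: zero_smult_car)
    finally show "?thesis x" unfolding qX E_def by simp
  qed
  have "msum N ?G {(q, X) \<in> outcomes n. eS n Ot R S q X = e}
     = msum N (\<lambda>x. if (case x of (q, X) \<Rightarrow> eS n Ot R S q X = e) then ?G x else 0\<^sub>m N N) (outcomes n)"
  proof -
    have "{(q, X) \<in> outcomes n. eS n Ot R S q X = e} = {x \<in> outcomes n. case x of (q, X) \<Rightarrow> eS n Ot R S q X = e}"
      by auto
    then show ?thesis using msum_if[OF finO, of N ?G "\<lambda>x. case x of (q, X) \<Rightarrow> eS n Ot R S q X = e"] by simp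
  qed
  also have "\<dots> = msum N (\<lambda>(q,X). (1/2 * of_int (\<Prod>j\<in>{}. q j)) \<cdot>\<^sub>m G_op n \<gamma> Ot q X) (outcomes n)
       + msum N (\<lambda>(q,X). (w2 X * of_int (\<Prod>j\<in>J. q j)) \<cdot>\<^sub>m G_op n \<gamma> Ot q X) (outcomes n)"
    by (subst msum_cong[OF pt], assumption, rule msum_add) (auto simp: outcomes_def Gop_car)
  also have "msum N (\<lambda>(q,X). (1/2 * of_int (\<Prod>j\<in>{}. q j)) \<cdot>\<^sub>m G_op n \<gamma> Ot q X) (outcomes n)
     = K \<cdot>\<^sub>m msum N (\<lambda>X. (1/2) \<cdot>\<^sub>m FJ {} X) (Pow ?I)"
    unfolding K_def by (rule outsum) simp
  also have "msum N (\<lambda>X. (1/2) \<cdot>\<^sub>m FJ {} X) (Pow ?I) = (2^(2*n) / 2) \<cdot>\<^sub>m 1\<^sub>m N"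
    unfolding FJ_empty by (subst msum_scalar) (auto simp: card_Pow)
  also have "msum N (\<lambda>(q,X). (w2 X * of_int (\<Prod>j\<in>J. q j)) \<cdot>\<^sub>m G_op n \<gamma> Ot q X) (outcomes n)
     = K \<cdot>\<^sub>m msum N (\<lambda>X. w2 X \<cdot>\<^sub>m FJ J X) (Pow ?I)"
    unfolding K_def by (rule outsum[OF J(1)])
  also have "msum N (\<lambda>X. w2 X \<cdot>\<^sub>m FJ J X) (Pow ?I) = (complex_of_int e / 2 * of_int (sgn1 d)) \<cdot>\<^sub>m msum N (\<lambda>X. of_int (xS X S) \<cdot>\<^sub>m FJ J X) (Pow ?I)"
    unfolding w2_def by (subst msum_smult[symmetric]) (auto simp: FJ_def foldr_car smult_smult_mat intro!: msum_cong)
  also have "msum N (\<lambda>X. of_int (xS X S) \<cdot>\<^sub>m FJ J X) (Pow ?I) = (2^(2*n) * complex_of_real d) \<cdot>\<^sub>m gammaS n \<gamma> S"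
    unfolding d_def by (rule Xsum[OF J(1) J(2) k1(1) assms(4) J(3)])
  finally have L: "msum N ?G {(q, X) \<in> outcomes n. eS n Ot R S q X = e} =
     K \<cdot>\<^sub>m ((2^(2*n) / 2) \<cdot>\<^sub>m 1\<^sub>m N) + K \<cdot>\<^sub>m ((complex_of_int e / 2 * of_int (sgn1 d)) \<cdot>\<^sub>m ((2^(2*n) * complex_of_real d) \<cdot>\<^sub>m gammaS n \<gamma> S))" .
  have Kv: "K * 2^(2*n) = 1" unfolding K_def by (rule Kval[OF k1(2)])
  have sd: "complex_of_int (sgn1 d) * complex_of_real d = complex_of_real \<bar>d\<bar>"
    using sgn1_mult[of d] by (metis of_real_mult of_real_of_int_eq)
  have cg: "gammaS n \<gamma> S \<in> carrier_mat N N" using gammaS_car[OF SI(1) fS] .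
  have c1: "K * (2^(2*n) / 2) = (1/2 :: complex)" using Kv by (simp add: field_simps)
  have c2: "K * (complex_of_int e / 2 * of_int (sgn1 d) * (2^(2*n) * complex_of_real d)) = 1/2 * (of_int e * complex_of_real \<bar>d\<bar>)"
  proof -
    have "K * (complex_of_int e / 2 * of_int (sgn1 d) * (2^(2*n) * complex_of_real d)) = (K * 2^(2*n)) * (complex_of_int e / 2) * (of_int (sgn1 d) * complex_of_real d)"
      by (simp add: algebra_simps)
    then show ?thesis unfolding Kv sd by simp
  qed
  have t1: "K \<cdot>\<^sub>m ((2^(2*n) / 2) \<cdot>\<^sub>m 1\<^sub>m N) = (1/2) \<cdot>\<^sub>m 1\<^sub>m N" by (simp only: smult_smult_mat c1)
  have t2: "K \<cdot>\<^sub>m ((complex_of_int e / 2 * of_int (sgn1 d)) \<cdot>\<^sub>m ((2^(2*n) * complex_of_real d) \<cdot>\<^sub>m gammaS n \<gamma> S))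
     = (1/2 * (of_int e * complex_of_real \<bar>d\<bar>)) \<cdot>\<^sub>m gammaS n \<gamma> S"
    by (simp only: smult_smult_mat c2)
  have t3: "(1/2) \<cdot>\<^sub>m (1\<^sub>m N + (of_int e * complex_of_real \<bar>d\<bar>) \<cdot>\<^sub>m gammaS n \<gamma> S)
     = (1/2) \<cdot>\<^sub>m 1\<^sub>m N + (1/2 * (of_int e * complex_of_real \<bar>d\<bar>)) \<cdot>\<^sub>m gammaS n \<gamma> S"
    using cg by (simp add: add_smult_distrib_left_mat[of _ N N] smult_smult_mat)
  show ?thesis unfolding L d_def[symmetric] t1 t2 t3 ..
qed



end
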